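(* Consider the gossip algorithm described in the context, under the standing assumptions stated there. Let $Z(k)=H\bar H\tilde x(k)$ and $\bar x(k)=W(k)\tilde x(k)$. Then $$\sum_{k=0}^{\infty}\mathbb{E}\big[\|\bar x(k)-Z(k)\|^2\,\big|\,\mathcal M_k\big]<\infty\quad\text{almost surely},$$ where $\mathcal M_k$ is the $\sigma$-field generated by the initial estimates $\tilde x^i(0)$, $i\in V$, and the pairs $(i_l,j_l)$, $1\le l\le k-1$.
   Context: Graphs and matrices. Let $V=\{1,\ldots,N\}$, $N\ge2$, and let $G_I=(V,E_I)$ (interference graph) be a connected undirected graph which is not complete, with adjacency matrix $A$; $B=A+I_N$. For $i\in V$: $N_I(i)$ is the neighbor set of $i$ in $G_I$, $\tilde N_I(i)=N_I(i)\cup\{i\}$, $m_i=\deg_{G_I}(i)+1$; $m=\sum_i m_i$. For $i,j\in V$: $s_{ij}=\sum_{l=1}^{j}B(i,l)+\sum_{r=1}^{i-1}m_r$; $E_j^i=e_{s_{ij}}\in\mathbb{R}^m$ if $j\in\tilde N_I(i)$, $E_j^i=\mathbf 0_m$ otherwise ($e_1,\dots,e_m$ standard basis of $\mathbb{R}^m$). $H=[\sum_iE_1^i,\ldots,\sum_iE_N^i]\in\mathbb{R}^{m\times N}$, $\bar H=\mathrm{diag}(1/m_1,\ldots,1/m_N)H^T$. The communication graph $G_C=(V,E_C)$ satisfies $G_m\subseteq G_C\subseteq G_I$ for a maximal triangle-free spanning subgraph $G_m$ of $G_I$ (triangle-free, spanning, and adding any edge of $G_I$ not in $G_m$ creates a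 triangle); $N_C(i)$ is the neighbor set of $i$ in $G_C$. $\mathrm{ind}(i,j)=\tilde N_I(i)\cap\tilde N_I(j)$ and $W_{ij}=I_m-\tfrac12\sum_{l\in\mathrm{ind}(i,j)}(E_l^i-E_l^j)(E_l^i-E_l^j)^T$. Game. Player $i$ has action set $\Omega_i\subset\mathbb{R}$, nonempty, compact and convex, and cost $J_i:\Omega^i\to\mathbb{R}$, $\Omega^i=\prod_{j\in\tilde N_I(i)}\Omega_j$, written $J_i(x_i,x_{-i}^i)$; $J_i$ is continuously differentiable in $x_i$, jointly continuous in $x^i$, and convex in $x_i$ for every $x_{-i}^i$. $T_{\Omega_i}$ denotes Euclidean projection onto $\Omega_i$. Algorithm. The state is $\tilde x(k)\in\mathbb{R}^m$, whose entry at position $s_{ij}$ ($i\in V$, $j\in\tilde N_I(i)$) is $\tilde x_j^i(k)\in\Omega_j$; the actions are $x_i(k)=\tilde x_i^i(k)$. Initial values $\tilde x^i(0)\in\Omega^i$ are arbitrary. At iteration $k$: $i_k$ is drawn uniformly from $V$ and $j_k$ uniformly from $N_C(i_k)$, independently of the past; $W(k)=W_{i_kj_k}$; $\bar x(k)=W(k)\tilde x(k)$; $\hat x_{-i}^i(k)=(\bar x_{s_{ij}}(k))_{j\in N_I(i)}$; for $i\in\{i_k,j_k\}$, $x_i(k+1)=T_{\Omega_i}[x_i(k)-\alpha_{k,i}\nabla_{x_i}J_i(x_i(k),\hat x_{-i}^i(k))]$, and $x_i(k+1)=x_i(k)$ otherwise; then $\tilde x_j^i(k+1)=\bar x_{s_{ij}}(k)$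 for $j\in N_I(i)$ and $\tilde x_i^i(k+1)=x_i(k+1)$. The step sizes are $\alpha_{k,i}=1/\nu_k(i)$, where $\nu_k(i)$ is the number of updates player $i$ has made up to time $k$; they satisfy $\sum_k\alpha_{k,i}^2<\infty$ and $\sum_k\alpha_{k,i}=\infty$ for all $i$. *)

theory Defs
  imports "HOL-Probability.Probability"
begin

(* Vectors of R^m are functions nat => real, meaningful on positions 1..m;
   matrices are functions nat => nat => real (row, column). *)

definition simple_graph :: "nat \<Rightarrow> (nat \<times> nat) set \<Rightarrow> bool" where
  "simple_graph N E \<longleftrightarrow> E \<subseteq> {1..N} \<times> {1..N} \<and> sym E \<and> (\<forall>i. (i,i) \<notin> E)"

definition graph_connected :: "nat \<Rightarrow> (nat \<times> nat) set \<Rightarrow> bool" where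
  "graph_connected N E \<longleftrightarrow> (\<forall>i\<in>{1..N}. \<forall>j\<in>{1..N}. (i,j) \<in> E\<^sup>*)"

definition graph_complete :: "nat \<Rightarrow> (nat \<times> nat) set \<Rightarrow> bool" where
  "graph_complete N E \<longleftrightarrow> (\<forall>i\<in>{1..N}. \<forall>j\<in>{1..N}. i \<noteq> j \<longrightarrow> (i,j) \<in> E)"

definition triangle_free :: "(nat \<times> nat) set \<Rightarrow> bool" where
  "triangle_free E \<longleftrightarrow> \<not> (\<exists>a b c. (a,b) \<in> E \<and> (b,c) \<in> E \<and> (a,c) \<in> E)"

definition max_tri_free_spanning :: "nat \<Rightarrow> (nat \<times> nat) set \<Rightarrow> (nat \<times> nat) set \<Rightarrow> bool" where
  "max_tri_free_spanning N EI Em \<longleftrightarrow>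
     simple_graph N Em \<and> Em \<subseteq> EI \<and> triangle_free Em \<and>
     (\<forall>(a,b)\<in>EI - Em. \<not> triangle_free (Em \<union> {(a,b),(b,a)}))"

definition NI :: "nat \<Rightarrow> (nat \<times> nat) set \<Rightarrow> nat \<Rightarrow> nat set" where
  "NI N E i = {j\<in>{1..N}. (i,j) \<in> E}"

definition NtI :: "nat \<Rightarrow> (nat \<times> nat) set \<Rightarrow> nat \<Rightarrow> nat set" where
  "NtI N E i = insert i (NI N E i)"

definition mi :: "nat \<Rightarrow> (nat \<times> nat) set \<Rightarrow> nat \<Rightarrow> nat" where
  "mi N E i = card (NI N E i) + 1"

definition mtot :: "nat \<Rightarrow> (nat \<times> nat) set \<Rightarrow> nat" where
  "mtot N E = (\<Sum>i=1..N. mi N E i)"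

definition Bmat :: "nat \<Rightarrow> (nat \<times> nat) set \<Rightarrow> nat \<Rightarrow> nat \<Rightarrow> nat" where
  "Bmat N E i l = (if l \<in> NtI N E i then 1 else 0)"

definition spos :: "nat \<Rightarrow> (nat \<times> nat) set \<Rightarrow> nat \<Rightarrow> nat \<Rightarrow> nat" where
  "spos N E i j = (\<Sum>l=1..j. Bmat N E i l) + (\<Sum>r=1..i-1. mi N E r)"

definition unitv :: "nat \<Rightarrow> nat \<Rightarrow> real" where
  "unitv p = (\<lambda>q. if q = p then 1 else 0)"

definition Evec :: "nat \<Rightarrow> (nat \<times> nat) set \<Rightarrow> nat \<Rightarrow> nat \<Rightarrow> nat \<Rightarrow> real" where
  "Evec N E i j = (if j \<in> NtI N E i then unitv (spos N E i j) else (\<lambda>_. 0))"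

definition Hmat :: "nat \<Rightarrow> (nat \<times> nat) set \<Rightarrow> nat \<Rightarrow> nat \<Rightarrow> real" where
  "Hmat N E p j = (\<Sum>i=1..N. Evec N E i j p)"

definition Hbar :: "nat \<Rightarrow> (nat \<times> nat) set \<Rightarrow> nat \<Rightarrow> nat \<Rightarrow> real" where
  "Hbar N E j p = Hmat N E p j / real (mi N E j)"

definition ind :: "nat \<Rightarrow> (nat \<times> nat) set \<Rightarrow> nat \<Rightarrow> nat \<Rightarrow> nat set" where
  "ind N E i j = NtI N E i \<inter> NtI N E j"

definition Wmat :: "nat \<Rightarrow> (nat \<times> nat) set \<Rightarrow> nat \<Rightarrow> nat \<Rightarrow> nat \<Rightarrow> nat \<Rightarrow> real" where
  "Wmat N E i j p q = (if p = q then 1 else 0)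
     - 1/2 * (\<Sum>l\<in>ind N E i j. (Evec N E i l p - Evec N E j l p) * (Evec N E i l q - Evec N E j l q))"

definition mulv :: "nat \<Rightarrow> (nat \<Rightarrow> nat \<Rightarrow> real) \<Rightarrow> (nat \<Rightarrow> real) \<Rightarrow> nat \<Rightarrow> real" where
  "mulv n A x = (\<lambda>p. \<Sum>q=1..n. A p q * x q)"

definition normsq :: "nat \<Rightarrow> (nat \<Rightarrow> real) \<Rightarrow> real" where
  "normsq n v = (\<Sum>p=1..n. (v p)^2)"

definition Omega_loc :: "nat \<Rightarrow> (nat \<times> nat) set \<Rightarrow> (nat \<Rightarrow> real set) \<Rightarrow> nat \<Rightarrow> (nat \<Rightarrow> real) set" where
  "Omega_loc N E Om i = {y. (\<forall>j\<in>NtI N E i. y j \<in> Om j) \<and> (\<forall>j. j \<notin> NtI N E i \<longrightarrow> y j = 0)}"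

text \<open>One iteration: given the drawn pair (a,b), step sizes alpha and the state xt,
  produce the next state. grad i y is the partial gradient of J_i w.r.t. x_i at the
  local profile y.\<close>
definition gstep :: "nat \<Rightarrow> (nat \<times> nat) set \<Rightarrow> (nat \<Rightarrow> real set) \<Rightarrow> (nat \<Rightarrow> (nat \<Rightarrow> real) \<Rightarrow> real)
    \<Rightarrow> (nat \<Rightarrow> real) \<Rightarrow> nat \<times> nat \<Rightarrow> (nat \<Rightarrow> real) \<Rightarrow> nat \<Rightarrow> real" where
  "gstep N E Om grad alpha ab xt =
     (let a = fst ab; b = snd ab;
          xb = mulv (mtot N E) (Wmat N E a b) xt
      in (\<lambda>p. if \<exists>i\<in>{1..N}. p = spos N E i i then
                 (let i = (THE i. i \<in> {1..N} \<and> p = spos N E i i) in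
                  if i = a \<or> i = b then
                    closest_point (Om i)
                      (xt p - alpha i * grad i (\<lambda>j. if j = i then xt p
                                                 else if j \<in> NI N E i then xb (spos N E i j) else 0))
                  else xt p)
               else xb p))"

definition nu :: "(nat \<Rightarrow> nat \<times> nat) \<Rightarrow> nat \<Rightarrow> nat \<Rightarrow> nat" where
  "nu \<omega> k i = card {l\<in>{..k}. fst (\<omega> l) = i \<or> snd (\<omega> l) = i}"

text \<open>The state tilde x(k) along the sequence of drawn pairs omega (omega k = (i_k, j_k)).\<close>
primrec gstate :: "nat \<Rightarrow> (nat \<times> nat) set \<Rightarrow> (nat \<Rightarrow> real set) \<Rightarrow> (nat \<Rightarrow> (nat \<Rightarrow> real) \<Rightarrow> real)
    \<Rightarrow> (nat \<Rightarrow> real) \<Rightarrow> (nat \<Rightarrow> nat \<times> nat) \<Rightarrow> nat \<Rightarrow> nat \<Rightarrow> real" where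
  "gstate N E Om grad x0 \<omega> 0 = x0"
| "gstate N E Om grad x0 \<omega> (Suc k) =
     gstep N E Om grad (\<lambda>i. 1 / real (nu \<omega> k i)) (\<omega> k) (gstate N E Om grad x0 \<omega> k)"

definition pair_pmf :: "nat \<Rightarrow> (nat \<times> nat) set \<Rightarrow> (nat \<times> nat) pmf" where
  "pair_pmf N EC = pmf_of_set {1..N} \<bind> (\<lambda>i. map_pmf (\<lambda>j. (i,j)) (pmf_of_set (NI N EC i)))"

definition pairs_space :: "nat \<Rightarrow> (nat \<times> nat) set \<Rightarrow> (nat \<Rightarrow> nat \<times> nat) measure" where
  "pairs_space N EC = (\<Pi>\<^sub>M k\<in>(UNIV::nat set). measure_pmf (pair_pmf N EC))"

text \<open>M_k: sigma-field generated by the (deterministic) initial estimates and the pairs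
  drawn at the iterations before k.\<close>
definition Mfield :: "nat \<Rightarrow> (nat \<times> nat) set \<Rightarrow> nat \<Rightarrow> (nat \<Rightarrow> nat \<times> nat) measure" where
  "Mfield N EC k = sigma (space (pairs_space N EC))
     {(\<lambda>\<omega>. \<omega> l) -` A \<inter> space (pairs_space N EC) | l A. l < k}"

end

theory Submission
  imports Defs
begin

locale gs =
  fixes N :: nat and EI EC Em :: "(nat \<times> nat) set"
  assumes N2: "N \<ge> 2"
    and GIs: "simple_graph N EI" and GIc: "graph_connected N EI"
    and Gm: "max_tri_free_spanning N EI Em"
    and GCs: "simple_graph N EC" and EmC: "Em \<subseteq> EC" and ECI: "EC \<subseteq> EI"
begin

abbreviation "V \<equiv> {1..N}"
abbreviation "nb \<equiv> NI N EI"
abbreviation "nbt \<equiv> NtI N EI"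
abbreviation "nbC \<equiv> NI N EC"
abbreviation "sp \<equiv> spos N EI"
abbreviation "m \<equiv> mtot N EI"
abbreviation "mm \<equiv> mi N EI"

definition rk :: "nat \<Rightarrow> nat \<Rightarrow> nat" where "rk i j = card (nbt i \<inter> {1..j})"
definition off :: "nat \<Rightarrow> nat" where "off i = (\<Sum>r=1..i-1. mm r)"

lemma EI_V: "(i,j) \<in> EI \<Longrightarrow> i \<in> V \<and> j \<in> V"
  using GIs unfolding simple_graph_def by auto
lemma EI_sym: "(i,j) \<in> EI \<Longrightarrow> (j,i) \<in> EI"
  using GIs unfolding simple_graph_def by (meson symD)
lemma EI_irr: "(i,i) \<notin> EI"
  using GIs unfolding simple_graph_def by auto
lemma EC_V: "(i,j) \<in> EC \<Longrightarrow> i \<in> V \<and> j \<in> V"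
  using GCs unfolding simple_graph_def by auto
lemma EC_sym: "(i,j) \<in> EC \<Longrightarrow> (j,i) \<in> EC"
  using GCs unfolding simple_graph_def by (meson symD)
lemma EC_irr: "(i,i) \<notin> EC"
  using GCs unfolding simple_graph_def by auto

lemma nb_iff: "j \<in> nb i \<longleftrightarrow> (i,j) \<in> EI"
  unfolding NI_def using EI_V by auto
lemma nbC_iff: "j \<in> nbC i \<longleftrightarrow> (i,j) \<in> EC"
  unfolding NI_def using EC_V by auto
lemma nb_sub: "nb i \<subseteq> V" unfolding NI_def by auto
lemma nbC_sub: "nbC i \<subseteq> V" unfolding NI_def by auto
lemma fin_nb[simp]: "finite (nb i)" using nb_sub finite_subset by blast
lemma fin_nbC[simp]: "finite (nbC i)" using nbC_sub finite_subset by blast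
lemma fin_nbt[simp]: "finite (nbt i)" unfolding NtI_def by simp
lemma nb_sym: "j \<in> nb i \<longleftrightarrow> i \<in> nb j" by (meson nb_iff EI_sym)
lemma nb_irr: "i \<notin> nb i" using nb_iff EI_irr by blast
lemma nbt_iff: "j \<in> nbt i \<longleftrightarrow> j = i \<or> j \<in> nb i" unfolding NtI_def by auto
lemma nbt_sub: "i \<in> V \<Longrightarrow> nbt i \<subseteq> V" unfolding NtI_def using nb_sub by auto
lemma nbt_sym: "j \<in> nbt i \<longleftrightarrow> i \<in> nbt j" unfolding nbt_iff using nb_sym[of j i] by auto
lemma nb_nV: "i \<notin> V \<Longrightarrow> nb i = {}" using nb_iff EI_V by blast
lemma mm_card: "mm i = card (nbt i)"
  unfolding mi_def NtI_def using nb_irr by simp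
lemma mm_pos: "mm i \<ge> 1" unfolding mi_def by simp
lemma card_nb: "card (nb i) \<le> N"
  using card_mono[OF _ nb_sub] by fastforce
lemma card_nbC: "card (nbC i) \<le> N"
  using card_mono[OF _ nbC_sub] by fastforce

lemma nbC_nb: "nbC i \<subseteq> nb i" using nbC_iff nb_iff ECI by blast

lemma holders: "j \<in> V \<Longrightarrow> {i\<in>V. j \<in> nbt i} = nbt j"
proof
  show "{i \<in> V. j \<in> nbt i} \<subseteq> nbt j" using nbt_sym by auto
  assume "j \<in> V"
  then show "nbt j \<subseteq> {i \<in> V. j \<in> nbt i}" using nbt_sym[of _ j] nbt_sub[of j] by auto
qed

lemma sum_B: "(\<Sum>l=1..j. Bmat N EI i l) = rk i j"
proof -
  have "(\<Sum>l=1..j. Bmat N EI i l) = (\<Sum>l\<in>{1..j}. if l \<in> nbt i then 1 else 0)"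
    unfolding Bmat_def by simp
  also have "\<dots> = card ({1..j} \<inter> nbt i)"
    by (simp add: sum.If_cases)
  finally show ?thesis unfolding rk_def by (simp add: Int_commute)
qed

lemma sp_eq: "sp i j = rk i j + off i"
  unfolding spos_def sum_B off_def by simp

lemma rk_ge1: "i \<in> V \<Longrightarrow> j \<in> nbt i \<Longrightarrow> 1 \<le> rk i j"
proof -
  assume a: "i \<in> V" "j \<in> nbt i"
  then have "j \<in> V" using nbt_sub by blast
  then have "j \<in> nbt i \<inter> {1..j}" using a by auto
  then show ?thesis unfolding rk_def
    by (metis One_nat_def Suc_leI card_gt_0_iff empty_iff fin_nbt finite_Int)
qed

lemma rk_le: "rk i j \<le> mm i"
  unfolding rk_def mm_card by (simp add: card_mono)

lemma rk_less: "j \<in> nbt i \<Longrightarrow> j' \<in> nbt i \<Longrightarrow> j < j' \<Longrightarrow> rk i j < rk i j'"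
proof -
  assume a: "j \<in> nbt i" "j' \<in> nbt i" "j < j'"
  have "nbt i \<inter> {1..j} \<subset> nbt i \<inter> {1..j'}"
  proof
    show "nbt i \<inter> {1..j} \<subseteq> nbt i \<inter> {1..j'}" using a by auto
    have "j' \<noteq> 0" using a by auto
    then have "j' \<in> nbt i \<inter> {1..j'}" using a by auto
    moreover have "j' \<notin> nbt i \<inter> {1..j}" using a by auto
    ultimately show "nbt i \<inter> {1..j} \<noteq> nbt i \<inter> {1..j'}" by blast
  qed
  then show ?thesis unfolding rk_def by (simp add: psubset_card_mono)
qed

lemma rk_inj: "inj_on (rk i) (nbt i)"
proof (rule inj_onI)
  fix j j' assume "j \<in> nbt i" "j' \<in> nbt i" "rk i j = rk i j'"
  then show "j = j'" using rk_less by (metis less_irrefl nat_neq_iff)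
qed

lemma rk_surj: "i \<in> V \<Longrightarrow> rk i ` nbt i = {1..mm i}"
proof -
  assume i: "i \<in> V"
  have sub: "rk i ` nbt i \<subseteq> {1..mm i}" using rk_ge1[OF i] rk_le by auto
  have "card (rk i ` nbt i) = mm i" using card_image[OF rk_inj] mm_card by simp
  then show ?thesis using sub by (simp add: card_subset_eq)
qed

lemma off_Suc: "i \<ge> 1 \<Longrightarrow> off (Suc i) = off i + mm i"
  unfolding off_def by (cases i) simp_all

lemma off_mono: "1 \<le> i \<Longrightarrow> i < i' \<Longrightarrow> off i + mm i \<le> off i'"
proof (induction i' rule: nat_less_induct)
  case (1 n)
  then obtain n' where n': "n = Suc n'" by (cases n) auto
  show ?case
  proof (cases "i = n'")
    case True then show ?thesis using off_Suc 1 n' by simp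
  next
    case False
    then have "i < n'" using 1 n' by simp
    then have h: "off i + mm i \<le> off n'" using 1 n' by auto
    have "off (Suc n') = off n' + mm n'" using off_Suc[of n'] \<open>i < n'\<close> 1 by simp
    then show ?thesis using h n' by simp
  qed
qed

lemma m_eq: "m = off (Suc N)"
  unfolding mtot_def off_def by simp

lemma off1: "off 1 = 0" unfolding off_def by simp

lemma valid_range: "i \<in> V \<Longrightarrow> j \<in> nbt i \<Longrightarrow> off i < sp i j \<and> sp i j \<le> off i + mm i"
  using rk_ge1 rk_le sp_eq by fastforce

lemma sp_range: "i \<in> V \<Longrightarrow> j \<in> nbt i \<Longrightarrow> sp i j \<in> {1..m}"
proof -
  assume a: "i \<in> V" "j \<in> nbt i"
  have "off i + mm i = off (Suc i)" using off_Suc a by simp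
  also have "\<dots> \<le> off (Suc N)"
    using a off_mono[of "Suc i" "Suc N"] off_Suc[of "Suc i"] by (cases "i = N") auto
  finally show ?thesis using valid_range[OF a] m_eq by auto
qed

lemma sp_inj: "i \<in> V \<Longrightarrow> j \<in> nbt i \<Longrightarrow> i' \<in> V \<Longrightarrow> j' \<in> nbt i' \<Longrightarrow> sp i j = sp i' j' \<Longrightarrow> i = i' \<and> j = j'"
proof -
  assume a: "i \<in> V" "j \<in> nbt i" "i' \<in> V" "j' \<in> nbt i'" "sp i j = sp i' j'"
  have "i = i'"
  proof (rule ccontr)
    assume "i \<noteq> i'"
    then consider "i < i'" | "i' < i" by linarith
    then show False
    proof cases
      case 1 then show ?thesis using off_mono[of i i'] valid_range[of i j] valid_range[of i' j'] a by auto
    next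
      case 2 then show ?thesis using off_mono[of i' i] valid_range[of i j] valid_range[of i' j'] a by auto
    qed
  qed
  then have "rk i j = rk i j'" using a sp_eq by simp
  then show ?thesis using rk_inj \<open>i = i'\<close> a by (metis inj_on_def)
qed

lemma sp_surj: "p \<in> {1..m} \<Longrightarrow> \<exists>i\<in>V. \<exists>j\<in>nbt i. p = sp i j"
proof -
  assume p: "p \<in> {1..m}"
  define S where "S = {i\<in>V. off i < p}"
  have "1 \<in> S" unfolding S_def using off1 p N2 by auto
  have finS: "finite S" unfolding S_def by simp
  define i where "i = Max S"
  have iS: "i \<in> S" unfolding i_def using finS \<open>1 \<in> S\<close> Max_in by blast
  then have iV: "i \<in> V" and oi: "off i < p" unfolding S_def by auto
  have "p \<le> off i + mm i"
  proof (cases "i = N")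
    case True then show ?thesis using off_Suc[of N] p m_eq N2 by auto
  next
    case False
    then have "Suc i \<in> V" using iV by auto
    have "Suc i \<notin> S" using Max_ge[OF finS, of "Suc i"] unfolding i_def by linarith
    then have "off (Suc i) \<ge> p" unfolding S_def using \<open>Suc i \<in> V\<close> by auto
    then show ?thesis using off_Suc iV by auto
  qed
  then have "p - off i \<in> {1..mm i}" using oi by auto
  then obtain j where "j \<in> nbt i" "rk i j = p - off i" using rk_surj[OF iV] by (metis imageE)
  then show ?thesis using iV oi sp_eq by (intro bexI[of _ i] bexI[of _ j]) auto
qed

end

context gs begin

lemma Evec_eq: "Evec N EI i l q = (if l \<in> nbt i \<and> q = sp i l then 1 else 0)"
  unfolding Evec_def unitv_def by auto

lemma sum_Evec: "i \<in> V \<Longrightarrow> l \<in> nbt i \<Longrightarrow> (\<Sum>q=1..m. Evec N EI i l q * x q) = x (sp i l)"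
proof -
  assume a: "i \<in> V" "l \<in> nbt i"
  have "(\<Sum>q=1..m. Evec N EI i l q * x q) = (\<Sum>q=1..m. if q = sp i l then x q else 0)"
    using a by (intro sum.cong) (auto simp: Evec_eq)
  also have "\<dots> = x (sp i l)" using sp_range[OF a] by (simp add: sum.delta')
  finally show ?thesis .
qed

lemma ind_sub: "ind N EI a b \<subseteq> nbt a" "ind N EI a b \<subseteq> nbt b"
  unfolding ind_def by auto

lemma fin_ind[simp]: "finite (ind N EI a b)" unfolding ind_def by simp

lemma W_id: "a = b \<or> \<not> (a \<in> V \<and> b \<in> V) \<Longrightarrow> Wmat N EI a b p q = (if p = q then 1 else 0)"
proof -
  assume h: "a = b \<or> \<not> (a \<in> V \<and> b \<in> V)"
  show ?thesis
  proof (cases "a = b")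
    case True then show ?thesis unfolding Wmat_def by simp
  next
    case False
    have "ind N EI a b = {}"
    proof (cases "a \<in> V")
      case True
      then have "b \<notin> V" using h False by auto
      then have "nbt b = {b}" using nb_nV unfolding NtI_def by auto
      moreover have "b \<notin> nbt a" using nbt_sub[OF True] \<open>b \<notin> V\<close> by auto
      ultimately show ?thesis unfolding ind_def by auto
    next
      case f2: False
      then have "nbt a = {a}" using nb_nV unfolding NtI_def by auto
      moreover have "a \<notin> nbt b"
      proof (cases "b \<in> V")
        case True then show ?thesis using nbt_sub[OF True] f2 by auto
      next
        case False then have "nbt b = {b}" using nb_nV unfolding NtI_def by auto
        then show ?thesis using \<open>a \<noteq> b\<close> by auto
      qed
      ultimately show ?thesis unfolding ind_def by auto
    qed
    then show ?thesis unfolding Wmat_def by simp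
  qed
qed

definition Wv :: "nat \<Rightarrow> nat \<Rightarrow> (nat \<Rightarrow> real) \<Rightarrow> nat \<Rightarrow> nat \<Rightarrow> real" where
  "Wv a b x i j = (if a \<in> V \<and> b \<in> V \<and> a \<noteq> b \<and> (i = a \<or> i = b) \<and> j \<in> ind N EI a b
     then (x (sp a j) + x (sp b j)) / 2 else x (sp i j))"

lemma W_gen: "mulv m (Wmat N EI a b) x p = (\<Sum>q=1..m. (if p = q then 1 else 0) * x q)
   - 1/2 * (\<Sum>l\<in>ind N EI a b. (Evec N EI a l p - Evec N EI b l p) *
        (\<Sum>q=1..m. (Evec N EI a l q - Evec N EI b l q) * x q))"
proof -
  let ?c = "\<lambda>l q. Evec N EI a l q - Evec N EI b l q"
  have "mulv m (Wmat N EI a b) x p = (\<Sum>q=1..m. (if p = q then 1 else 0) * x q - 1/2 * (\<Sum>l\<in>ind N EI a b. ?c l p * ?c l q * x q))"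
    unfolding mulv_def Wmat_def by (intro sum.cong refl) (simp add: left_diff_distrib sum_distrib_right mult.assoc)
  also have "\<dots> = (\<Sum>q=1..m. (if p = q then 1 else 0) * x q) - 1/2 * (\<Sum>q=1..m. \<Sum>l\<in>ind N EI a b. ?c l p * ?c l q * x q)"
    by (simp add: sum_subtractf sum_distrib_left)
  also have "(\<Sum>q=1..m. \<Sum>l\<in>ind N EI a b. ?c l p * ?c l q * x q) = (\<Sum>l\<in>ind N EI a b. ?c l p * (\<Sum>q=1..m. ?c l q * x q))"
    by (subst sum.swap) (simp add: sum_distrib_left mult.assoc)
  finally show ?thesis by simp
qed

lemma W_valid: "i \<in> V \<Longrightarrow> j \<in> nbt i \<Longrightarrow> mulv m (Wmat N EI a b) x (sp i j) = Wv a b x i j"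
proof -
  assume ij: "i \<in> V" "j \<in> nbt i"
  have pr: "sp i j \<in> {1..m}" using sp_range[OF ij] .
  have d: "(\<Sum>q=1..m. (if sp i j = q then 1 else 0) * x q) = x (sp i j)"
  proof -
    have "(\<Sum>q=1..m. (if sp i j = q then 1 else 0) * x q) = (\<Sum>q=1..m. if sp i j = q then x q else 0)"
      by (intro sum.cong) auto
    then show ?thesis using pr by (simp add: sum.delta)
  qed
  show ?thesis
  proof (cases "a \<in> V \<and> b \<in> V \<and> a \<noteq> b")
    case False
    then have c: "a = b \<or> \<not> (a \<in> V \<and> b \<in> V)" by blast
    have "mulv m (Wmat N EI a b) x (sp i j) = (\<Sum>q=1..m. (if sp i j = q then 1 else 0) * x q)"
      unfolding mulv_def W_id[OF c] ..
    then have "mulv m (Wmat N EI a b) x (sp i j) = x (sp i j)" using d by simp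
    moreover have "Wv a b x i j = x (sp i j)" unfolding Wv_def using False by auto
    ultimately show ?thesis by simp
  next
    case True
    then have aV: "a \<in> V" and bV: "b \<in> V" and ab: "a \<noteq> b" by auto
    let ?I = "ind N EI a b"
    let ?g = "\<lambda>l. x (sp a l) - x (sp b l)"
    have inner: "(\<Sum>q=1..m. (Evec N EI a l q - Evec N EI b l q) * x q) = ?g l" if l: "l \<in> ?I" for l
    proof -
      have la: "l \<in> nbt a" and lb: "l \<in> nbt b" using l ind_sub(1)[of a b] ind_sub(2)[of a b] by auto
      show ?thesis using sum_Evec[OF aV la, of x] sum_Evec[OF bV lb, of x]
        by (simp add: left_diff_distrib sum_subtractf)
    qed
    have Ea: "Evec N EI a l (sp i j) = (if i = a \<and> l = j then 1 else 0)" if l: "l \<in> ?I" for l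
    proof -
      have la: "l \<in> nbt a" using l ind_sub(1)[of a b] by blast
      have "sp i j = sp a l \<longleftrightarrow> i = a \<and> l = j" using sp_inj[OF ij aV la] by auto
      then show ?thesis unfolding Evec_eq using la by simp
    qed
    have Eb: "Evec N EI b l (sp i j) = (if i = b \<and> l = j then 1 else 0)" if l: "l \<in> ?I" for l
    proof -
      have lb: "l \<in> nbt b" using l ind_sub(2)[of a b] by blast
      have "sp i j = sp b l \<longleftrightarrow> i = b \<and> l = j" using sp_inj[OF ij bV lb] by auto
      then show ?thesis unfolding Evec_eq using lb by simp
    qed
    have "(\<Sum>l\<in>?I. (Evec N EI a l (sp i j) - Evec N EI b l (sp i j)) *
        (\<Sum>q=1..m. (Evec N EI a l q - Evec N EI b l q) * x q))
       = (\<Sum>l\<in>?I. (if i = a \<and> l = j then ?g l else 0) - (if i = b \<and> l = j then ?g l else 0))"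
    proof (rule sum.cong[OF refl])
      fix l assume l: "l \<in> ?I"
      show "(Evec N EI a l (sp i j) - Evec N EI b l (sp i j)) *
        (\<Sum>q=1..m. (Evec N EI a l q - Evec N EI b l q) * x q) =
        (if i = a \<and> l = j then ?g l else 0) - (if i = b \<and> l = j then ?g l else 0)"
        unfolding Ea[OF l] Eb[OF l] inner[OF l] by simp
    qed
    also have "\<dots> = (\<Sum>l\<in>?I. if i = a \<and> l = j then ?g l else 0) - (\<Sum>l\<in>?I. if i = b \<and> l = j then ?g l else 0)"
      by (rule sum_subtractf)
    also have "(\<Sum>l\<in>?I. if i = a \<and> l = j then ?g l else 0) = (if i = a \<and> j \<in> ?I then ?g j else 0)"
      by (cases "i = a") (simp_all add: sum.delta)
    also have "(\<Sum>l\<in>?I. if i = b \<and> l = j then ?g l else 0) = (if i = b \<and> j \<in> ?I then ?g j else 0)"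
      by (cases "i = b") (simp_all add: sum.delta)
    finally have S: "(\<Sum>l\<in>?I. (Evec N EI a l (sp i j) - Evec N EI b l (sp i j)) *
        (\<Sum>q=1..m. (Evec N EI a l q - Evec N EI b l q) * x q)) =
        (if i = a \<and> j \<in> ?I then ?g j else 0) - (if i = b \<and> j \<in> ?I then ?g j else 0)" .
    have main: "mulv m (Wmat N EI a b) x (sp i j) = x (sp i j) - 1/2 * ((if i = a \<and> j \<in> ?I then ?g j else 0) - (if i = b \<and> j \<in> ?I then ?g j else 0))"
      unfolding W_gen S d ..
    show ?thesis
    proof (cases "j \<in> ?I")
      case False
      then show ?thesis unfolding main Wv_def by simp
    next
      case jI: True
      show ?thesis
      proof (cases "i = a")
        case True then show ?thesis unfolding main Wv_def using jI ab aV bV by (simp add: field_simps)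
      next
        case na: False
        show ?thesis
        proof (cases "i = b")
          case True then show ?thesis unfolding main Wv_def using jI ab aV bV na by (simp add: field_simps)
        next
          case False then show ?thesis unfolding main Wv_def using na by simp
        qed
      qed
    qed
  qed
qed

definition Zv :: "(nat \<Rightarrow> real) \<Rightarrow> nat \<Rightarrow> real" where
  "Zv x j = (\<Sum>i'\<in>nbt j. x (sp i' j)) / real (mm j)"

lemma Hmat_valid: "i \<in> V \<Longrightarrow> j \<in> nbt i \<Longrightarrow> j' \<in> V \<Longrightarrow> Hmat N EI (sp i j) j' = (if j' = j then 1 else 0)"
proof -
  assume ij: "i \<in> V" "j \<in> nbt i" and j': "j' \<in> V"
  have "Hmat N EI (sp i j) j' = (\<Sum>i'\<in>V. if i' = i \<and> j' = j then 1 else 0)"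
    unfolding Hmat_def using sp_inj[OF ij] ij by (intro sum.cong) (auto simp: Evec_eq)
  also have "\<dots> = (if j' = j then 1 else 0)" using ij by (auto simp: sum.delta')
  finally show ?thesis .
qed

lemma Hbar_mul: "j \<in> V \<Longrightarrow> mulv m (Hbar N EI) x j = Zv x j"
proof -
  assume jV: "j \<in> V"
  have "mulv m (Hbar N EI) x j = (\<Sum>q=1..m. Hmat N EI q j * x q) / real (mm j)"
    unfolding mulv_def Hbar_def by (simp add: sum_divide_distrib)
  also have "(\<Sum>q=1..m. Hmat N EI q j * x q) = (\<Sum>i'\<in>V. \<Sum>q=1..m. Evec N EI i' j q * x q)"
    unfolding Hmat_def by (simp add: sum_distrib_right) (rule sum.swap)
  also have "\<dots> = (\<Sum>i'\<in>V. if j \<in> nbt i' then x (sp i' j) else 0)"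
  proof (intro sum.cong refl)
    fix i' assume "i' \<in> V"
    show "(\<Sum>q=1..m. Evec N EI i' j q * x q) = (if j \<in> nbt i' then x (sp i' j) else 0)"
    proof (cases "j \<in> nbt i'")
      case True then show ?thesis using sum_Evec[OF \<open>i' \<in> V\<close> True] by simp
    next
      case False then show ?thesis by (simp add: Evec_eq)
    qed
  qed
  also have "\<dots> = (\<Sum>i'\<in>{i'\<in>V. j \<in> nbt i'}. x (sp i' j))"
    by (rule sum.inter_filter[symmetric]) simp
  also have "\<dots> = (\<Sum>i'\<in>nbt j. x (sp i' j))" using holders[OF jV] by simp
  finally show ?thesis unfolding Zv_def .
qed

lemma Z_valid: "i \<in> V \<Longrightarrow> j \<in> nbt i \<Longrightarrow> mulv N (Hmat N EI) (mulv m (Hbar N EI) x) (sp i j) = Zv x j"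
proof -
  assume ij: "i \<in> V" "j \<in> nbt i"
  then have jV: "j \<in> V" using nbt_sub by blast
  have "mulv N (Hmat N EI) (mulv m (Hbar N EI) x) (sp i j) = (\<Sum>j'\<in>V. if j' = j then mulv m (Hbar N EI) x j' else 0)"
    unfolding mulv_def using Hmat_valid[OF ij] by (intro sum.cong) auto
  also have "\<dots> = mulv m (Hbar N EI) x j" using jV by (simp add: sum.delta')
  finally show ?thesis using Hbar_mul[OF jV] by simp
qed

definition Phi :: "(nat \<Rightarrow> real) \<Rightarrow> real" where
  "Phi x = (\<Sum>i\<in>V. \<Sum>j\<in>nb i. (x (sp i j) - x (sp j j))\<^sup>2)"

lemma Phi_nonneg: "Phi x \<ge> 0" unfolding Phi_def by (intro sum_nonneg) auto

lemma term_le_Phi: "i \<in> V \<Longrightarrow> j \<in> nb i \<Longrightarrow> (x (sp i j) - x (sp j j))\<^sup>2 \<le> Phi x"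
proof -
  assume a: "i \<in> V" "j \<in> nb i"
  have "(x (sp i j) - x (sp j j))\<^sup>2 \<le> (\<Sum>j\<in>nb i. (x (sp i j) - x (sp j j))\<^sup>2)"
    using a by (intro member_le_sum) auto
  also have "\<dots> \<le> Phi x" unfolding Phi_def using a by (intro member_le_sum sum_nonneg) auto
  finally show ?thesis .
qed

lemma dev_le: "j \<in> V \<Longrightarrow> i' \<in> nbt j \<Longrightarrow> \<bar>x (sp i' j) - x (sp j j)\<bar> \<le> sqrt (Phi x)"
proof -
  assume a: "j \<in> V" "i' \<in> nbt j"
  have "(x (sp i' j) - x (sp j j))\<^sup>2 \<le> Phi x"
  proof (cases "i' = j")
    case True then show ?thesis using Phi_nonneg by simp
  next
    case False
    then have "i' \<in> nb j" using a nbt_iff by auto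
    then have "j \<in> nb i'" "i' \<in> V" using nb_sym[of i' j] nb_sub[of j] by auto
    then show ?thesis using term_le_Phi by blast
  qed
  then show ?thesis by (simp add: real_le_rsqrt)
qed

lemma entry_bound: "i \<in> V \<Longrightarrow> j \<in> nbt i \<Longrightarrow> (Wv a b x i j - Zv x j)\<^sup>2 \<le> 4 * Phi x"
proof -
  assume ij: "i \<in> V" "j \<in> nbt i"
  then have jV: "j \<in> V" using nbt_sub by blast
  let ?s = "sqrt (Phi x)"
  have u: "\<bar>Wv a b x i j - x (sp j j)\<bar> \<le> ?s"
  proof (cases "a \<in> V \<and> b \<in> V \<and> a \<noteq> b \<and> (i = a \<or> i = b) \<and> j \<in> ind N EI a b")
    case True
    then have "j \<in> nbt a" "j \<in> nbt b" using ind_sub(1)[of a b] ind_sub(2)[of a b] by auto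
    then have "a \<in> nbt j" "b \<in> nbt j" using nbt_sym[of j a] nbt_sym[of j b] by auto
    then have h1: "\<bar>x (sp a j) - x (sp j j)\<bar> \<le> ?s" "\<bar>x (sp b j) - x (sp j j)\<bar> \<le> ?s"
      using dev_le[OF jV] by auto
    have "Wv a b x i j - x (sp j j) = ((x (sp a j) - x (sp j j)) + (x (sp b j) - x (sp j j))) / 2"
      unfolding Wv_def using True by (simp add: field_simps)
    then show ?thesis using h1 by (simp add: abs_le_iff)
  next
    case False
    then have "Wv a b x i j = x (sp i j)" unfolding Wv_def by auto
    moreover have "i \<in> nbt j" using nbt_sym[of j i] ij by simp
    ultimately show ?thesis using dev_le[OF jV, of i x] by simp
  qed
  have cpos: "real (mm j) > 0" using mm_pos by (simp add: Suc_le_eq)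
  have "Zv x j - x (sp j j) = (\<Sum>i'\<in>nbt j. x (sp i' j) - x (sp j j)) / real (mm j)"
  proof -
    have "(\<Sum>i'\<in>nbt j. x (sp i' j) - x (sp j j)) = (\<Sum>i'\<in>nbt j. x (sp i' j)) - real (mm j) * x (sp j j)"
      by (simp add: sum_subtractf mm_card)
    then show ?thesis using cpos by (simp add: Zv_def diff_divide_distrib)
  qed
  moreover have "\<bar>\<Sum>i'\<in>nbt j. x (sp i' j) - x (sp j j)\<bar> \<le> real (mm j) * ?s"
  proof -
    have "\<bar>\<Sum>i'\<in>nbt j. x (sp i' j) - x (sp j j)\<bar> \<le> (\<Sum>i'\<in>nbt j. \<bar>x (sp i' j) - x (sp j j)\<bar>)"
      by (rule sum_abs)
    also have "\<dots> \<le> (\<Sum>i'\<in>nbt j. ?s)" using dev_le[OF jV] by (intro sum_mono) auto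
    also have "\<dots> = real (mm j) * ?s" by (simp add: mm_card)
    finally show ?thesis .
  qed
  ultimately have v: "\<bar>Zv x j - x (sp j j)\<bar> \<le> ?s" using cpos
    by (simp add: abs_divide divide_le_eq mult.commute)
  have "\<bar>Wv a b x i j - Zv x j\<bar> \<le> 2 * ?s" using u v by linarith
  then have "\<bar>Wv a b x i j - Zv x j\<bar>\<^sup>2 \<le> (2 * ?s)\<^sup>2" by (intro power_mono) auto
  then show ?thesis using Phi_nonneg by (simp add: power_mult_distrib)
qed

lemma F_bound: "normsq m (\<lambda>p. mulv m (Wmat N EI a b) x p - mulv N (Hmat N EI) (mulv m (Hbar N EI) x) p)
   \<le> real m * (4 * Phi x)"
proof -
  have "normsq m (\<lambda>p. mulv m (Wmat N EI a b) x p - mulv N (Hmat N EI) (mulv m (Hbar N EI) x) p)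
     \<le> (\<Sum>p=1..m. 4 * Phi x)"
    unfolding normsq_def
  proof (rule sum_mono)
    fix p assume "p \<in> {1..m}"
    then obtain i j where ij: "i \<in> V" "j \<in> nbt i" and p: "p = sp i j" using sp_surj by blast
    show "(mulv m (Wmat N EI a b) x p - mulv N (Hmat N EI) (mulv m (Hbar N EI) x) p)\<^sup>2 \<le> 4 * Phi x"
      unfolding p W_valid[OF ij] Z_valid[OF ij] using entry_bound[OF ij] .
  qed
  then show ?thesis by simp
qed

end

lemma sq_sum_le: "((p::real) + q)\<^sup>2 \<le> 2 * p\<^sup>2 + 2 * q\<^sup>2"
proof -
  have e: "(p + q)\<^sup>2 = 2 * p\<^sup>2 + 2 * q\<^sup>2 - (p - q)\<^sup>2" by (simp add: power2_eq_square algebra_simps)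
  have "(p - q)\<^sup>2 \<ge> 0" by simp
  then show ?thesis using e by linarith
qed

context gs begin

definition Rf :: "(nat \<Rightarrow> real) \<Rightarrow> nat \<Rightarrow> nat \<Rightarrow> real" where
  "Rf x a b = 1/2 * (\<Sum>l\<in>ind N EI a b. (x (sp a l) - x (sp b l))\<^sup>2)"

definition Qf :: "(nat \<Rightarrow> real) \<Rightarrow> real" where
  "Qf x = (\<Sum>a\<in>V. \<Sum>b\<in>nbC a. Rf x a b)"

lemma Rf_nonneg: "Rf x a b \<ge> 0" unfolding Rf_def by (intro mult_nonneg_nonneg sum_nonneg) auto

lemma Rf_ge: "l \<in> ind N EI a b \<Longrightarrow> (x (sp a l) - x (sp b l))\<^sup>2 \<le> 2 * Rf x a b"
proof -
  assume l: "l \<in> ind N EI a b"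
  have "(x (sp a l) - x (sp b l))\<^sup>2 \<le> (\<Sum>l\<in>ind N EI a b. (x (sp a l) - x (sp b l))\<^sup>2)"
    using l by (intro member_le_sum) auto
  then show ?thesis unfolding Rf_def by simp
qed

lemma Rf_le_Q: "(a,b) \<in> EC \<Longrightarrow> Rf x a b \<le> Qf x"
proof -
  assume e: "(a,b) \<in> EC"
  then have aV: "a \<in> V" and b: "b \<in> nbC a" using EC_V nbC_iff by auto
  have "Rf x a b \<le> (\<Sum>b\<in>nbC a. Rf x a b)" using b by (intro member_le_sum Rf_nonneg) auto
  also have "\<dots> \<le> Qf x" unfolding Qf_def using aV by (intro member_le_sum sum_nonneg Rf_nonneg) auto
  finally show ?thesis .
qed

lemma Em_simple: "simple_graph N Em" using Gm unfolding max_tri_free_spanning_def by auto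
lemma Em_EI: "Em \<subseteq> EI" using Gm unfolding max_tri_free_spanning_def by auto

lemma tri: "(i,j) \<in> EI \<Longrightarrow> (i,j) \<notin> Em \<Longrightarrow> \<exists>c. (i,c) \<in> Em \<and> (c,j) \<in> Em"
proof -
  assume ij: "(i,j) \<in> EI" "(i,j) \<notin> Em"
  have tf: "triangle_free Em" and symE: "sym Em" and nl: "\<And>u. (u,u) \<notin> Em"
    using Gm Em_simple unfolding max_tri_free_spanning_def simple_graph_def by auto
  have neq: "i \<noteq> j" using ij EI_irr by auto
  have "\<not> triangle_free (Em \<union> {(i,j),(j,i)})" using Gm ij unfolding max_tri_free_spanning_def by auto
  then obtain a b c where e: "(a,b) \<in> Em \<union> {(i,j),(j,i)}" "(b,c) \<in> Em \<union> {(i,j),(j,i)}" "(a,c) \<in> Em \<union> {(i,j),(j,i)}"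
    unfolding triangle_free_def by blast
  have s: "\<And>u v. (u,v) \<in> Em \<Longrightarrow> (v,u) \<in> Em" using symE by (meson symD)
  have nt: "\<not> ((a,b) \<in> Em \<and> (b,c) \<in> Em \<and> (a,c) \<in> Em)" using tf unfolding triangle_free_def by blast
  show ?thesis
  proof (cases "(a,b) \<in> Em")
    case ab: True
    show ?thesis
    proof (cases "(b,c) \<in> Em")
      case bc: True
      then have "(a,c) \<in> {(i,j),(j,i)}" using nt ab e(3) by blast
      then show ?thesis using ab bc s by auto
    next
      case bc: False
      then have bc': "(b,c) \<in> {(i,j),(j,i)}" using e(2) by blast
      then have "(a,c) \<in> Em" using e(3) neq nl ab by auto
      then show ?thesis using ab bc' s by auto
    qed
  next
    case ab: False
    then have ab': "(a,b) \<in> {(i,j),(j,i)}" using e(1) by blast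
    then have bc: "(b,c) \<in> Em" using e(2) e(3) neq nl by auto
    then have "(a,c) \<in> Em" using e(3) ab' neq nl by auto
    then show ?thesis using ab' bc s by auto
  qed
qed

lemma term_le_Q: "i \<in> V \<Longrightarrow> j \<in> nb i \<Longrightarrow> (x (sp i j) - x (sp j j))\<^sup>2 \<le> 8 * Qf x"
proof -
  assume iV: "i \<in> V" and j: "j \<in> nb i"
  have eI: "(i,j) \<in> EI" using j nb_iff by auto
  have jV: "j \<in> V" using j nb_sub[of i] by auto
  have Q0: "Qf x \<ge> 0" unfolding Qf_def by (intro sum_nonneg Rf_nonneg)
  show ?thesis
  proof (cases "(j,i) \<in> EC")
    case True
    have "j \<in> ind N EI j i" unfolding ind_def NtI_def using j nb_sym[of j i] by auto
    then have "(x (sp j j) - x (sp i j))\<^sup>2 \<le> 2 * Rf x j i" by (rule Rf_ge)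
    also have "\<dots> \<le> 2 * Qf x" using Rf_le_Q[OF True] by simp
    finally show ?thesis using Q0 by (simp add: power2_commute)
  next
    case False
    then have "(i,j) \<notin> EC" using EC_sym by blast
    then have "(i,j) \<notin> Em" using EmC by blast
    then obtain c where c: "(i,c) \<in> Em" "(c,j) \<in> Em" using tri eI by blast
    have cEC: "(i,c) \<in> EC" "(c,j) \<in> EC" using c EmC by auto
    have cj: "j \<in> nb c" using c Em_EI nb_iff by auto
    have j1: "j \<in> ind N EI i c" unfolding ind_def NtI_def using j cj by auto
    have j2: "j \<in> ind N EI c j" unfolding ind_def NtI_def using cj by auto
    have "(x (sp i j) - x (sp j j))\<^sup>2 \<le> 2 * (x (sp i j) - x (sp c j))\<^sup>2 + 2 * (x (sp c j) - x (sp j j))\<^sup>2"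
    proof -
      have "(x (sp i j) - x (sp j j))\<^sup>2 = ((x (sp i j) - x (sp c j)) + (x (sp c j) - x (sp j j)))\<^sup>2" by simp
      also have "\<dots> \<le> 2 * (x (sp i j) - x (sp c j))\<^sup>2 + 2 * (x (sp c j) - x (sp j j))\<^sup>2"
        by (rule sq_sum_le)
      finally show ?thesis .
    qed
    also have "\<dots> \<le> 2 * (2 * Rf x i c) + 2 * (2 * Rf x c j)"
      using Rf_ge[OF j1, of x] Rf_ge[OF j2, of x] by linarith
    also have "\<dots> \<le> 8 * Qf x" using Rf_le_Q[OF cEC(1), of x] Rf_le_Q[OF cEC(2), of x] by linarith
    finally show ?thesis .
  qed
qed

lemma Phi_le_Q: "Phi x \<le> 8 * real N ^ 2 * Qf x"
proof -
  have Q0: "Qf x \<ge> 0" unfolding Qf_def by (intro sum_nonneg Rf_nonneg)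
  have "Phi x \<le> (\<Sum>i\<in>V. \<Sum>j\<in>nb i. 8 * Qf x)"
    unfolding Phi_def by (intro sum_mono term_le_Q) auto
  also have "\<dots> = (\<Sum>i\<in>V. real (card (nb i)) * (8 * Qf x))" by simp
  also have "\<dots> \<le> (\<Sum>i\<in>V. real N * (8 * Qf x))"
    using card_nb Q0 by (intro sum_mono mult_right_mono) auto
  also have "\<dots> = 8 * real N ^ 2 * Qf x" by (simp add: power2_eq_square)
  finally show ?thesis .
qed


end

lemma alg1: "((B::real) - A)\<^sup>2 - ((A+B)/2 - A)\<^sup>2 = 3/4 * (A - B)\<^sup>2" by (simp add: power2_eq_square field_simps)
lemma alg1': "((A::real) - B)\<^sup>2 - ((A+B)/2 - B)\<^sup>2 = 3/4 * (A - B)\<^sup>2" by (simp add: power2_eq_square field_simps)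
lemma alg2: "((A::real) - C)\<^sup>2 - ((A+B)/2 - C)\<^sup>2 + ((B - C)\<^sup>2 - ((A+B)/2 - C)\<^sup>2) = 1/2*(A - B)\<^sup>2" by (simp add: power2_eq_square field_simps)
lemma alg3: "(e::real) > 0 \<Longrightarrow> (u - d)\<^sup>2 \<le> (1+e)*u\<^sup>2 + (1+1/e)*d\<^sup>2"
proof -
  assume e: "e > 0"
  have "(1+e)*u\<^sup>2 + (1+1/e)*d\<^sup>2 - (u-d)\<^sup>2 = (e*u + d)\<^sup>2/e" using e by (simp add: power2_eq_square field_simps)
  moreover have "(e*u + d)\<^sup>2/e \<ge> 0" using e by simp
  ultimately show ?thesis by linarith
qed

context gs begin

lemma pair_term: "a \<in> V \<Longrightarrow> b \<in> V \<Longrightarrow> a \<noteq> b \<Longrightarrow> j \<in> ind N EI a b \<Longrightarrow>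
  1/2 * (x (sp a j) - x (sp b j))\<^sup>2 \<le>
   (if j = a then 0 else (x (sp a j) - x (sp j j))\<^sup>2 - (Wv a b x a j - x (sp j j))\<^sup>2) +
   (if j = b then 0 else (x (sp b j) - x (sp j j))\<^sup>2 - (Wv a b x b j - x (sp j j))\<^sup>2)"
proof -
  assume a: "a \<in> V" "b \<in> V" "a \<noteq> b" "j \<in> ind N EI a b"
  have wa: "Wv a b x a j = (x (sp a j) + x (sp b j)) / 2" and wb: "Wv a b x b j = (x (sp a j) + x (sp b j)) / 2"
    unfolding Wv_def using a by auto
  have sq: "(x (sp a j) - x (sp b j))\<^sup>2 \<ge> 0" by simp
  show ?thesis
  proof (cases "j = a")
    case True
    then have "j \<noteq> b" using a by auto
    have "(if j = b then 0 else (x (sp b j) - x (sp j j))\<^sup>2 - (Wv a b x b j - x (sp j j))\<^sup>2)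
       = (x (sp b j) - x (sp a j))\<^sup>2 - ((x (sp a j) + x (sp b j)) / 2 - x (sp a j))\<^sup>2"
      unfolding wb using True \<open>j \<noteq> b\<close> by simp
    also have "\<dots> = 3/4 * (x (sp a j) - x (sp b j))\<^sup>2" by (rule alg1)
    finally have h: "(if j = b then 0 else (x (sp b j) - x (sp j j))\<^sup>2 - (Wv a b x b j - x (sp j j))\<^sup>2)
       = 3/4 * (x (sp a j) - x (sp b j))\<^sup>2" .
    have z: "(if j = a then 0 else (x (sp a j) - x (sp j j))\<^sup>2 - (Wv a b x a j - x (sp j j))\<^sup>2) = 0"
      using True by simp
    show ?thesis using h z sq by linarith
  next
    case ja: False
    show ?thesis
    proof (cases "j = b")
      case True
      have "(if j = a then 0 else (x (sp a j) - x (sp j j))\<^sup>2 - (Wv a b x a j - x (sp j j))\<^sup>2)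
         = (x (sp a j) - x (sp b j))\<^sup>2 - ((x (sp a j) + x (sp b j)) / 2 - x (sp b j))\<^sup>2"
        unfolding wa using True ja by simp
      also have "\<dots> = 3/4 * (x (sp a j) - x (sp b j))\<^sup>2" by (rule alg1')
      finally have h: "(if j = a then 0 else (x (sp a j) - x (sp j j))\<^sup>2 - (Wv a b x a j - x (sp j j))\<^sup>2)
         = 3/4 * (x (sp a j) - x (sp b j))\<^sup>2" .
      have z: "(if j = b then 0 else (x (sp b j) - x (sp j j))\<^sup>2 - (Wv a b x b j - x (sp j j))\<^sup>2) = 0"
        using True by simp
      show ?thesis using h z sq by linarith
    next
      case False
      then show ?thesis unfolding wa wb using ja alg2[of "x (sp a j)" "x (sp j j)" "x (sp b j)"] by simp
    qed
  qed
qed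

lemma Phi_tilde: "a \<in> V \<Longrightarrow> b \<in> V \<Longrightarrow> a \<noteq> b \<Longrightarrow>
  (\<Sum>i\<in>V. \<Sum>j\<in>nb i. (Wv a b x i j - x (sp j j))\<^sup>2) \<le> Phi x - Rf x a b"
proof -
  assume a: "a \<in> V" "b \<in> V" "a \<noteq> b"
  let ?I = "ind N EI a b"
  define D where "D i j = (x (sp i j) - x (sp j j))\<^sup>2 - (Wv a b x i j - x (sp j j))\<^sup>2" for i j
  define D' where "D' i j = (if j = i then 0 else D i j)" for i j
  have D0: "D i j = 0" if "i \<noteq> a" "i \<noteq> b" for i j
    unfolding D_def Wv_def using that by simp
  have D0': "D i j = 0" if "j \<notin> ?I" for i j
    unfolding D_def Wv_def using that by simp
  have diff: "Phi x - (\<Sum>i\<in>V. \<Sum>j\<in>nb i. (Wv a b x i j - x (sp j j))\<^sup>2) = (\<Sum>i\<in>V. \<Sum>j\<in>nb i. D i j)"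
    unfolding Phi_def D_def by (simp add: sum_subtractf)
  have s1: "(\<Sum>i\<in>V. \<Sum>j\<in>nb i. D i j) = (\<Sum>i\<in>{a,b}. \<Sum>j\<in>nb i. D i j)"
    using a by (intro sum.mono_neutral_right) (auto simp: D0)
  also have "\<dots> = (\<Sum>j\<in>nb a. D a j) + (\<Sum>j\<in>nb b. D b j)" using a by simp
  finally have s2: "(\<Sum>i\<in>V. \<Sum>j\<in>nb i. D i j) = (\<Sum>j\<in>nb a. D a j) + (\<Sum>j\<in>nb b. D b j)" .
  have s3: "(\<Sum>j\<in>nb i. D i j) = (\<Sum>j\<in>?I. D' i j)" if i: "i = a \<or> i = b" for i
  proof -
    have "(\<Sum>j\<in>nb i. D i j) = (\<Sum>j\<in>nb i. D' i j)" unfolding D'_def using nb_irr[of i] by (intro sum.cong) auto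
    also have "\<dots> = (\<Sum>j\<in>nbt i. D' i j)" unfolding NtI_def using nb_irr[of i] by (simp add: D'_def)
    also have "\<dots> = (\<Sum>j\<in>?I. D' i j)"
    proof (rule sum.mono_neutral_right)
      show "?I \<subseteq> nbt i" using i ind_sub by blast
      show "\<forall>j\<in>nbt i - ?I. D' i j = 0" unfolding D'_def using D0' by auto
    qed simp
    finally show ?thesis .
  qed
  have "Rf x a b = (\<Sum>j\<in>?I. 1/2 * (x (sp a j) - x (sp b j))\<^sup>2)" unfolding Rf_def by (simp add: sum_distrib_left)
  also have "\<dots> \<le> (\<Sum>j\<in>?I. D' a j + D' b j)"
    using pair_term[OF a] unfolding D'_def D_def by (intro sum_mono) auto
  also have "\<dots> = (\<Sum>i\<in>V. \<Sum>j\<in>nb i. D i j)" unfolding s2 s3[of a, simplified] s3[of b, simplified] by (simp add: sum.distrib)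
  finally show ?thesis using diff by linarith
qed

end

locale gs2 = gs +
  fixes Om :: "nat \<Rightarrow> real set" and grad :: "nat \<Rightarrow> (nat \<Rightarrow> real) \<Rightarrow> real"
  assumes Om: "\<And>i. i \<in> {1..N} \<Longrightarrow> Om i \<noteq> {} \<and> compact (Om i) \<and> convex (Om i)"
    and gradcont: "\<And>i. i \<in> {1..N} \<Longrightarrow> continuous_on (Omega_loc N EI Om i) (grad i)"
begin

definition valid :: "(nat \<Rightarrow> real) \<Rightarrow> bool" where
  "valid x \<longleftrightarrow> (\<forall>i\<in>V. \<forall>j\<in>nbt i. x (sp i j) \<in> Om j)"

abbreviation xb where "xb a b x \<equiv> mulv m (Wmat N EI a b) x"

definition yloc :: "nat \<Rightarrow> nat \<Rightarrow> (nat \<Rightarrow> real) \<Rightarrow> nat \<Rightarrow> nat \<Rightarrow> real" where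
  "yloc a b x i = (\<lambda>j. if j = i then x (sp i i) else if j \<in> nb i then xb a b x (sp i j) else 0)"

lemma ii: "i \<in> nbt i" unfolding NtI_def by simp

lemma gstep_own: "i \<in> V \<Longrightarrow> gstep N EI Om grad \<alpha> (a,b) x (sp i i) =
   (if i = a \<or> i = b then closest_point (Om i) (x (sp i i) - \<alpha> i * grad i (yloc a b x i)) else x (sp i i))"
proof -
  assume iV: "i \<in> V"
  have ex: "\<exists>i'\<in>V. sp i i = sp i' i'" using iV by blast
  have th: "(THE i'. i' \<in> V \<and> sp i i = sp i' i') = i"
  proof (rule the_equality)
    show "i \<in> V \<and> sp i i = sp i i" using iV by simp
    fix i' assume "i' \<in> V \<and> sp i i = sp i' i'"
    then show "i' = i" using sp_inj[OF iV ii, of i' i'] ii by auto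
  qed
  show ?thesis unfolding gstep_def Let_def fst_conv snd_conv th using ex by (simp add: yloc_def)
qed

lemma gstep_oth: "i \<in> V \<Longrightarrow> j \<in> nb i \<Longrightarrow> gstep N EI Om grad \<alpha> (a,b) x (sp i j) = xb a b x (sp i j)"
proof -
  assume iV: "i \<in> V" and j: "j \<in> nb i"
  have jt: "j \<in> nbt i" using j unfolding NtI_def by simp
  have "\<not> (\<exists>i'\<in>V. sp i j = sp i' i')"
  proof
    assume "\<exists>i'\<in>V. sp i j = sp i' i'"
    then obtain i' where "i' \<in> V" "sp i j = sp i' i'" by blast
    then have "i = i' \<and> j = i'" using sp_inj[OF iV jt, of i' i'] ii by auto
    then show False using j nb_irr by auto
  qed
  then show ?thesis unfolding gstep_def Let_def by simp
qed

lemma Om_closed: "j \<in> V \<Longrightarrow> closed (Om j)" using Om compact_imp_closed by blast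

lemma valid_xb: "valid x \<Longrightarrow> i \<in> V \<Longrightarrow> j \<in> nbt i \<Longrightarrow> xb a b x (sp i j) \<in> Om j"
proof -
  assume v: "valid x" and ij: "i \<in> V" "j \<in> nbt i"
  have jV: "j \<in> V" using ij nbt_sub by blast
  show ?thesis
  proof (cases "a \<in> V \<and> b \<in> V \<and> a \<noteq> b \<and> (i = a \<or> i = b) \<and> j \<in> ind N EI a b")
    case True
    then have ja: "j \<in> nbt a" and jb: "j \<in> nbt b" and aV: "a \<in> V" and bV: "b \<in> V"
      using ind_sub(1)[of a b] ind_sub(2)[of a b] by auto
    have u: "x (sp a j) \<in> Om j" "x (sp b j) \<in> Om j" using v ja jb aV bV unfolding valid_def by auto
    have "(1/2::real) *\<^sub>R x (sp a j) + (1/2::real) *\<^sub>R x (sp b j) \<in> Om j"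
      by (rule convexD) (use Om[OF jV] u in auto)
    moreover have "(x (sp a j) + x (sp b j)) / 2 = (1/2::real) *\<^sub>R x (sp a j) + (1/2::real) *\<^sub>R x (sp b j)"
      by simp
    ultimately have "(x (sp a j) + x (sp b j)) / 2 \<in> Om j" by metis
    then show ?thesis unfolding W_valid[OF ij] Wv_def using True by simp
  next
    case False
    then show ?thesis unfolding W_valid[OF ij] Wv_def using v ij unfolding valid_def by auto
  qed
qed

lemma valid_step: "valid x \<Longrightarrow> valid (gstep N EI Om grad \<alpha> ab x)"
proof -
  assume v: "valid x"
  obtain a b where ab: "ab = (a,b)" by (cases ab)
  show ?thesis unfolding valid_def ab
  proof (intro ballI)
    fix i j assume iV: "i \<in> V" and j: "j \<in> nbt i"
    show "gstep N EI Om grad \<alpha> (a, b) x (sp i j) \<in> Om j"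
    proof (cases "j = i")
      case True
      then show ?thesis unfolding True gstep_own[OF iV]
        using closest_point_in_set[OF Om_closed[OF iV]] Om[OF iV] v iV ii unfolding valid_def by auto
    next
      case False
      then have "j \<in> nb i" using j nbt_iff by auto
      then show ?thesis unfolding gstep_oth[OF iV \<open>j \<in> nb i\<close>] using valid_xb[OF v iV j] by simp
    qed
  qed
qed

lemma valid_state: "valid x0 \<Longrightarrow> valid (gstate N EI Om grad x0 \<omega> k)"
  by (induction k) (auto intro: valid_step)

lemma yloc_Omega: "valid x \<Longrightarrow> i \<in> V \<Longrightarrow> yloc a b x i \<in> Omega_loc N EI Om i"
proof -
  assume v: "valid x" and iV: "i \<in> V"
  have 1: "\<forall>j\<in>nbt i. yloc a b x i j \<in> Om j"
  proof
    fix j assume j: "j \<in> nbt i"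
    show "yloc a b x i j \<in> Om j"
    proof (cases "j = i")
      case True
      have "x (sp i i) \<in> Om i" using v iV ii unfolding valid_def by blast
      then show ?thesis using True unfolding yloc_def by simp
    next
      case False
      then have "j \<in> nb i" using j nbt_iff by blast
      then show ?thesis using False valid_xb[OF v iV j] unfolding yloc_def by simp
    qed
  qed
  have 2: "\<forall>j. j \<notin> nbt i \<longrightarrow> yloc a b x i j = 0"
    unfolding yloc_def using nbt_iff by auto
  show ?thesis unfolding Omega_loc_def using 1 2 by blast
qed

lemma Omega_PiE: "Omega_loc N EI Om i = PiE UNIV (\<lambda>j. if j \<in> nbt i then Om j else {0})"
  unfolding Omega_loc_def PiE_def Pi_def extensional_def by auto

lemma Omega_compact: "i \<in> V \<Longrightarrow> compact (Omega_loc N EI Om i)"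
proof -
  assume iV: "i \<in> V"
  have "compactin (product_topology (\<lambda>j. euclidean) UNIV) (PiE UNIV (\<lambda>j. if j \<in> nbt i then Om j else {0::real}))"
  proof -
    have "\<forall>j\<in>UNIV. compactin euclidean (if j \<in> nbt i then Om j else {0::real})"
    proof
      fix j :: nat
      show "compactin euclidean (if j \<in> nbt i then Om j else {0::real})"
      proof (cases "j \<in> nbt i")
        case True
        then have "j \<in> V" using nbt_sub[OF iV] by blast
        then have "compact (Om j)" using Om by blast
        then show ?thesis using True unfolding compactin_euclidean_iff by simp
      next
        case False then show ?thesis unfolding compactin_euclidean_iff by simp
      qed
    qed
    then show ?thesis unfolding compactin_PiE by blast
  qed
  then show ?thesis unfolding Omega_PiE euclidean_product_topology compactin_euclidean_iff .
qed

lemma G_exists: "\<exists>G\<ge>0. \<forall>i\<in>V. \<forall>y\<in>Omega_loc N EI Om i. \<bar>grad i y\<bar> \<le> G"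
proof -
  have "\<forall>i\<in>V. \<exists>B. \<forall>y\<in>Omega_loc N EI Om i. \<bar>grad i y\<bar> \<le> B"
  proof
    fix i assume iV: "i \<in> V"
    have "compact (grad i ` Omega_loc N EI Om i)"
      using compact_continuous_image[OF gradcont[OF iV] Omega_compact[OF iV]] .
    then have "bounded (grad i ` Omega_loc N EI Om i)" by (rule compact_imp_bounded)
    then obtain B where "\<forall>z\<in>grad i ` Omega_loc N EI Om i. \<bar>z\<bar> \<le> B" unfolding bounded_real by blast
    then show "\<exists>B. \<forall>y\<in>Omega_loc N EI Om i. \<bar>grad i y\<bar> \<le> B" by auto
  qed
  from bchoice[OF this] obtain B where B: "\<forall>i\<in>V. \<forall>y\<in>Omega_loc N EI Om i. \<bar>grad i y\<bar> \<le> B i" by blast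
  define G where "G = (\<Sum>i\<in>V. \<bar>B i\<bar>)"
  show ?thesis
  proof (intro exI[of _ G] conjI ballI)
    show "0 \<le> G" unfolding G_def by (simp add: sum_nonneg)
    fix i y assume iV: "i \<in> V" and y: "y \<in> Omega_loc N EI Om i"
    have "\<bar>grad i y\<bar> \<le> B i" using B iV y by blast
    also have "B i \<le> \<bar>B i\<bar>" by simp
    also have "\<bar>B i\<bar> \<le> G" unfolding G_def using iV by (intro member_le_sum) auto
    finally show "\<bar>grad i y\<bar> \<le> G" .
  qed
qed

definition Gb where "Gb = (SOME G. G \<ge> 0 \<and> (\<forall>i\<in>V. \<forall>y\<in>Omega_loc N EI Om i. \<bar>grad i y\<bar> \<le> G))"

lemma Gb: "Gb \<ge> 0" "i \<in> V \<Longrightarrow> y \<in> Omega_loc N EI Om i \<Longrightarrow> \<bar>grad i y\<bar> \<le> Gb"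
  using someI_ex[OF G_exists] unfolding Gb_def by auto

lemma D_exists: "\<exists>D\<ge>0. \<forall>j\<in>V. \<forall>t\<in>Om j. \<bar>t\<bar> \<le> D"
proof -
  have "\<forall>j\<in>V. \<exists>B. \<forall>t\<in>Om j. \<bar>t\<bar> \<le> B"
  proof
    fix j assume jV: "j \<in> V"
    have "bounded (Om j)" using Om[OF jV] by (simp add: compact_imp_bounded)
    then show "\<exists>B. \<forall>t\<in>Om j. \<bar>t\<bar> \<le> B" unfolding bounded_real .
  qed
  from bchoice[OF this] obtain B where B: "\<forall>j\<in>V. \<forall>t\<in>Om j. \<bar>t\<bar> \<le> B j" by blast
  define D where "D = (\<Sum>j\<in>V. \<bar>B j\<bar>)"
  show ?thesis
  proof (intro exI[of _ D] conjI ballI)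
    show "0 \<le> D" unfolding D_def by (simp add: sum_nonneg)
    fix j t assume jV: "j \<in> V" and t: "t \<in> Om j"
    have "\<bar>t\<bar> \<le> B j" using B jV t by blast
    also have "B j \<le> \<bar>B j\<bar>" by simp
    also have "\<bar>B j\<bar> \<le> D" unfolding D_def using jV by (intro member_le_sum) auto
    finally show "\<bar>t\<bar> \<le> D" .
  qed
qed

definition Db where "Db = (SOME D. D \<ge> 0 \<and> (\<forall>j\<in>V. \<forall>t\<in>Om j. \<bar>t\<bar> \<le> D))"

lemma Db: "Db \<ge> 0" "j \<in> V \<Longrightarrow> t \<in> Om j \<Longrightarrow> \<bar>t\<bar> \<le> Db"
  using someI_ex[OF D_exists] unfolding Db_def by auto

lemma Phi_bound: "valid x \<Longrightarrow> Phi x \<le> real N * real N * (2 * Db)\<^sup>2"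
proof -
  assume v: "valid x"
  have t: "(x (sp i j) - x (sp j j))\<^sup>2 \<le> (2 * Db)\<^sup>2" if "i \<in> V" "j \<in> nb i" for i j
  proof -
    have jV: "j \<in> V" using that nb_sub by blast
    have "x (sp i j) \<in> Om j" "x (sp j j) \<in> Om j" using v that jV ii unfolding valid_def NtI_def by auto
    then have "\<bar>x (sp i j)\<bar> \<le> Db" "\<bar>x (sp j j)\<bar> \<le> Db" using Db(2)[OF jV] by auto
    then have "\<bar>x (sp i j) - x (sp j j)\<bar> \<le> 2 * Db" by linarith
    then show ?thesis by (metis abs_ge_zero power2_abs power_mono)
  qed
  have "Phi x \<le> (\<Sum>i\<in>V. \<Sum>j\<in>nb i. (2 * Db)\<^sup>2)" unfolding Phi_def by (intro sum_mono t) auto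
  also have "\<dots> = (\<Sum>i\<in>V. real (card (nb i)) * (2 * Db)\<^sup>2)" by simp
  also have "\<dots> \<le> (\<Sum>i\<in>V. real N * (2 * Db)\<^sup>2)" using card_nb by (intro sum_mono mult_right_mono) auto
  also have "\<dots> = real N * real N * (2 * Db)\<^sup>2" by simp
  finally show ?thesis .
qed

lemma drift: "valid x \<Longrightarrow> j \<in> V \<Longrightarrow> (\<forall>i. \<alpha> i \<ge> 0) \<Longrightarrow>
  \<bar>gstep N EI Om grad \<alpha> (a,b) x (sp j j) - x (sp j j)\<bar> \<le> (if j = a \<or> j = b then \<alpha> j * Gb else 0)"
proof -
  assume v: "valid x" and jV: "j \<in> V" and al: "\<forall>i. \<alpha> i \<ge> 0"
  show ?thesis
  proof (cases "j = a \<or> j = b")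
    case True
    let ?z = "x (sp j j)" and ?g = "grad j (yloc a b x j)"
    have z: "?z \<in> Om j" using v jV ii unfolding valid_def by auto
    have "\<bar>closest_point (Om j) (?z - \<alpha> j * ?g) - ?z\<bar> = dist (closest_point (Om j) (?z - \<alpha> j * ?g)) (closest_point (Om j) ?z)"
      using closest_point_self[OF z] by (simp add: dist_real_def)
    also have "\<dots> \<le> dist (?z - \<alpha> j * ?g) ?z"
      using closest_point_lipschitz Om[OF jV] Om_closed[OF jV] by blast
    also have "\<dots> = \<alpha> j * \<bar>?g\<bar>" using al by (simp add: dist_real_def abs_mult)
    also have "\<dots> \<le> \<alpha> j * Gb" using Gb(2)[OF jV yloc_Omega[OF v jV]] al by (simp add: mult_left_mono)
    finally show ?thesis unfolding gstep_own[OF jV] using True by simp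
  next
    case False
    then show ?thesis unfolding gstep_own[OF jV] by simp
  qed
qed

lemma Phi_step: "valid x \<Longrightarrow> (a,b) \<in> EC \<Longrightarrow> (\<forall>i. \<alpha> i \<ge> 0) \<Longrightarrow> \<epsilon> > 0 \<Longrightarrow>
  Phi (gstep N EI Om grad \<alpha> (a,b) x) \<le> (1+\<epsilon>) * (Phi x - Rf x a b)
     + (1 + 1/\<epsilon>) * real N * ((\<alpha> a * Gb)\<^sup>2 + (\<alpha> b * Gb)\<^sup>2)"
proof -
  assume v: "valid x" and e: "(a,b) \<in> EC" and al: "\<forall>i. \<alpha> i \<ge> 0" and ep: "\<epsilon> > 0"
  have aV: "a \<in> V" and bV: "b \<in> V" and ab: "a \<noteq> b" using e EC_V EC_irr by auto
  let ?x' = "gstep N EI Om grad \<alpha> (a,b) x"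
  define u where "u i j = Wv a b x i j - x (sp j j)" for i j
  define d where "d j = ?x' (sp j j) - x (sp j j)" for j
  define eta where "eta j = (if j = a \<or> j = b then \<alpha> j * Gb else 0)" for j
  have dle: "(d j)\<^sup>2 \<le> (eta j)\<^sup>2" if "j \<in> V" for j
  proof -
    have "\<bar>d j\<bar> \<le> eta j" unfolding d_def eta_def using drift[OF v that al] .
    then show ?thesis by (metis abs_ge_zero power2_abs power_mono)
  qed
  have x'e: "?x' (sp i j) - ?x' (sp j j) = u i j - d j" if "i \<in> V" "j \<in> nb i" for i j
  proof -
    have jt: "j \<in> nbt i" using that(2) unfolding NtI_def by simp
    show ?thesis unfolding u_def d_def gstep_oth[OF that] W_valid[OF that(1) jt] by simp
  qed
  have "Phi ?x' = (\<Sum>i\<in>V. \<Sum>j\<in>nb i. (u i j - d j)\<^sup>2)"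
    unfolding Phi_def using x'e by (intro sum.cong refl) auto
  also have "\<dots> \<le> (\<Sum>i\<in>V. \<Sum>j\<in>nb i. (1+\<epsilon>) * (u i j)\<^sup>2 + (1+1/\<epsilon>) * (d j)\<^sup>2)"
    using alg3[OF ep] by (intro sum_mono) auto
  also have "\<dots> = (1+\<epsilon>) * (\<Sum>i\<in>V. \<Sum>j\<in>nb i. (u i j)\<^sup>2) + (1+1/\<epsilon>) * (\<Sum>i\<in>V. \<Sum>j\<in>nb i. (d j)\<^sup>2)"
    by (simp add: sum.distrib sum_distrib_left)
  also have "(\<Sum>i\<in>V. \<Sum>j\<in>nb i. (u i j)\<^sup>2) \<le> Phi x - Rf x a b"
    unfolding u_def using Phi_tilde[OF aV bV ab] .
  also have "(\<Sum>i\<in>V. \<Sum>j\<in>nb i. (d j)\<^sup>2) \<le> real N * ((\<alpha> a * Gb)\<^sup>2 + (\<alpha> b * Gb)\<^sup>2)"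
  proof -
    have "(\<Sum>j\<in>V. (eta j)\<^sup>2) = (\<Sum>j\<in>V \<inter> {j. j = a \<or> j = b}. (eta j)\<^sup>2)"
      unfolding eta_def by (intro sum.mono_neutral_right) auto
    also have "V \<inter> {j. j = a \<or> j = b} = {a,b}" using aV bV by auto
    also have "(\<Sum>j\<in>{a,b}. (eta j)\<^sup>2) = (\<alpha> a * Gb)\<^sup>2 + (\<alpha> b * Gb)\<^sup>2" using ab unfolding eta_def by simp
    finally have etas: "(\<Sum>j\<in>V. (eta j)\<^sup>2) = (\<alpha> a * Gb)\<^sup>2 + (\<alpha> b * Gb)\<^sup>2" .
    have "(\<Sum>j\<in>nb i. (d j)\<^sup>2) \<le> (\<alpha> a * Gb)\<^sup>2 + (\<alpha> b * Gb)\<^sup>2" if "i \<in> V" for i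
    proof -
      have "(\<Sum>j\<in>nb i. (d j)\<^sup>2) \<le> (\<Sum>j\<in>V. (d j)\<^sup>2)" using nb_sub by (intro sum_mono2) auto
      also have "\<dots> \<le> (\<Sum>j\<in>V. (eta j)\<^sup>2)" using dle by (intro sum_mono) auto
      finally show ?thesis using etas by simp
    qed
    then have "(\<Sum>i\<in>V. \<Sum>j\<in>nb i. (d j)\<^sup>2) \<le> (\<Sum>i\<in>V. (\<alpha> a * Gb)\<^sup>2 + (\<alpha> b * Gb)\<^sup>2)" by (intro sum_mono) auto
    then show ?thesis by simp
  qed
  finally show ?thesis using ep by (simp add: mult_left_mono)
qed

end

lemma pred_coord: "l \<in> J \<Longrightarrow> Measurable.pred (PiM J (\<lambda>_. measure_pmf P)) (\<lambda>x. x l = c)"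
proof -
  assume l: "l \<in> J"
  have "(\<lambda>x. x l) \<in> measurable (PiM J (\<lambda>_. measure_pmf P)) (measure_pmf P)"
    by (rule measurable_component_singleton[OF l])
  then have "(\<lambda>x. x l) -` {c} \<inter> space (PiM J (\<lambda>_. measure_pmf P)) \<in> sets (PiM J (\<lambda>_. measure_pmf P))"
    by (rule measurable_sets) simp
  moreover have "(\<lambda>x. x l) -` {c} \<inter> space (PiM J (\<lambda>_. measure_pmf P)) = {x\<in>space (PiM J (\<lambda>_. measure_pmf P)). x l = c}"
    by auto
  ultimately show ?thesis unfolding pred_def by simp
qed

lemma meas_dep:
  fixes g :: "(nat \<Rightarrow> nat \<times> nat) \<Rightarrow> 'b::topological_space"
  assumes dep: "\<And>x y. (\<forall>l<n. x l = y l) \<Longrightarrow> g x = g y" and J: "{..<n} \<subseteq> J"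
  shows "g \<in> borel_measurable (PiM J (\<lambda>_. measure_pmf P))"
proof -
  let ?M = "PiM J (\<lambda>_. measure_pmf P)"
  define L where "L x = map x [0..<n]" for x :: "nat \<Rightarrow> nat \<times> nat"
  define g' where "g' xs = g (\<lambda>l. xs ! l)" for xs :: "(nat \<times> nat) list"
  have eq: "g x = g' (L x)" for x unfolding g'_def L_def by (rule dep) simp
  have Lm: "L \<in> measurable ?M (count_space UNIV)"
    unfolding measurable_count_space_eq2_countable
  proof (intro conjI ballI)
    show "L \<in> space ?M \<rightarrow> UNIV" by simp
    fix xs :: "(nat \<times> nat) list" assume "xs \<in> UNIV"
    show "L -` {xs} \<inter> space ?M \<in> sets ?M"
    proof (cases "length xs = n")
      case True
      have e: "map x [0..<n] = xs \<longleftrightarrow> (\<forall>l\<in>{..<n}. x l = xs ! l)" for x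
        using True by (simp add: list_eq_iff_nth_eq Ball_def lessThan_iff)
      have "L -` {xs} \<inter> space ?M = {x\<in>space ?M. \<forall>l\<in>{..<n}. x l = xs ! l}"
        unfolding L_def using e by blast
      moreover have "Measurable.pred ?M (\<lambda>x. \<forall>l\<in>{..<n}. x l = xs ! l)"
        by (intro pred_intros_finite pred_coord) (use J in auto)
      ultimately show ?thesis unfolding pred_def by simp
    next
      case False
      then have "L -` {xs} \<inter> space ?M = {}" unfolding L_def by auto
      then show ?thesis by simp
    qed
  qed
  have g'm: "g' \<in> measurable (count_space UNIV) borel" by (simp add: measurable_count_space_eq1)
  have "g = g' \<circ> L" by (rule ext) (simp add: eq)
  then show ?thesis using measurable_comp[OF Lm g'm] by simp
qed

lemma pps: "product_prob_space (\<lambda>_::nat. measure_pmf P)"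
  by unfold_locales

lemma restr_int:
  fixes h :: "(nat \<Rightarrow> nat \<times> nat) \<Rightarrow> ennreal"
  assumes dep_h: "\<And>x y. (\<forall>l<n. x l = y l) \<Longrightarrow> h x = h y"
  shows "(\<integral>\<^sup>+\<omega>. h \<omega> \<partial>PiM UNIV (\<lambda>_. measure_pmf P)) = (\<integral>\<^sup>+x. h x \<partial>PiM {..<n} (\<lambda>_. measure_pmf P))"
proof -
  interpret product_prob_space "\<lambda>_::nat. measure_pmf P" UNIV by (rule pps)
  have hm: "h \<in> borel_measurable (PiM {..<n} (\<lambda>_. measure_pmf P))" using meas_dep[of n h "{..<n}" P] dep_h by blast
  have d: "distr (PiM UNIV (\<lambda>_. measure_pmf P)) (PiM {..<n} (\<lambda>_. measure_pmf P)) (\<lambda>x. restrict x {..<n}) = PiM {..<n} (\<lambda>_. measure_pmf P)"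
    by (rule distr_PiM_restrict_finite) auto
  have "(\<integral>\<^sup>+x. h x \<partial>PiM {..<n} (\<lambda>_. measure_pmf P)) = (\<integral>\<^sup>+x. h x \<partial>distr (PiM UNIV (\<lambda>_. measure_pmf P)) (PiM {..<n} (\<lambda>_. measure_pmf P)) (\<lambda>x. restrict x {..<n}))"
    using d by simp
  also have "\<dots> = (\<integral>\<^sup>+\<omega>. h (restrict \<omega> {..<n}) \<partial>PiM UNIV (\<lambda>_. measure_pmf P))"
    by (rule nn_integral_distr) (simp_all add: measurable_restrict_subset d hm)
  also have "\<dots> = (\<integral>\<^sup>+\<omega>. h \<omega> \<partial>PiM UNIV (\<lambda>_. measure_pmf P))"
    by (intro nn_integral_cong dep_h) simp
  finally show ?thesis by simp
qed

lemma split_int: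
  fixes g :: "(nat \<Rightarrow> nat \<times> nat) \<Rightarrow> ennreal"
  assumes dep: "\<And>x y. (\<forall>l<Suc k. x l = y l) \<Longrightarrow> g x = g y"
  shows "(\<integral>\<^sup>+\<omega>. g \<omega> \<partial>PiM UNIV (\<lambda>_. measure_pmf P)) =
    (\<integral>\<^sup>+\<omega>. (\<integral>\<^sup>+p. g (fun_upd \<omega> k p) \<partial>measure_pmf P) \<partial>PiM UNIV (\<lambda>_. measure_pmf P))"
proof -
  interpret product_prob_space "\<lambda>_::nat. measure_pmf P" UNIV by (rule pps)
  have "(\<integral>\<^sup>+\<omega>. g \<omega> \<partial>PiM UNIV (\<lambda>_. measure_pmf P)) = (\<integral>\<^sup>+x. g x \<partial>PiM {..<Suc k} (\<lambda>_. measure_pmf P))"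
    by (rule restr_int[OF dep])
  also have "{..<Suc k} = insert k {..<k}" by auto
  also have "(\<integral>\<^sup>+x. g x \<partial>PiM (insert k {..<k}) (\<lambda>_. measure_pmf P)) =
      (\<integral>\<^sup>+x. (\<integral>\<^sup>+y. g (fun_upd x k y) \<partial>measure_pmf P) \<partial>PiM {..<k} (\<lambda>_. measure_pmf P))"
  proof (rule product_nn_integral_insert)
    show "g \<in> borel_measurable (PiM (insert k {..<k}) (\<lambda>_. measure_pmf P))"
      by (rule meas_dep[OF dep]) auto
  qed simp_all
  also have "\<dots> = (\<integral>\<^sup>+\<omega>. (\<integral>\<^sup>+p. g (fun_upd \<omega> k p) \<partial>measure_pmf P) \<partial>PiM UNIV (\<lambda>_. measure_pmf P))"
  proof (rule restr_int[symmetric])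
    fix x y :: "nat \<Rightarrow> nat \<times> nat" assume xy: "\<forall>l<k. x l = y l"
    show "(\<integral>\<^sup>+p. g (fun_upd x k p) \<partial>measure_pmf P) = (\<integral>\<^sup>+p. g (fun_upd y k p) \<partial>measure_pmf P)"
      by (intro nn_integral_cong dep) (use xy in \<open>auto simp: less_Suc_eq\<close>)
  qed
  finally show ?thesis .
qed


locale gs3 = gs2 +
  fixes x0 :: "nat \<Rightarrow> real"
  assumes x0v: "valid x0"
begin

abbreviation "Pm \<equiv> pair_pmf N EC"
abbreviation "Mp \<equiv> PiM (UNIV::nat set) (\<lambda>_. measure_pmf Pm)"

lemma Mp_eq: "pairs_space N EC = Mp" unfolding pairs_space_def by simp

lemma V_ne: "V \<noteq> {}" using N2 by auto

lemma nbC_ne: "a \<in> V \<Longrightarrow> nbC a \<noteq> {}"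
proof -
  assume aV: "a \<in> V"
  obtain b where bV: "b \<in> V" and ba: "b \<noteq> a"
  proof (cases "a = 1")
    case True then show ?thesis using that[of 2] N2 by auto
  next
    case False then show ?thesis using that[of 1] N2 aV by auto
  qed
  have "(a,b) \<in> EI\<^sup>*" using GIc aV bV unfolding graph_connected_def by blast
  then obtain c where c: "(a,c) \<in> EI" using ba by (cases rule: converse_rtranclE) auto
  show ?thesis
  proof (cases "(a,c) \<in> Em")
    case True then have "c \<in> nbC a" using EmC nbC_iff by auto
    then show ?thesis by auto
  next
    case False
    then obtain c' where "(a,c') \<in> Em" using tri c by blast
    then have "c' \<in> nbC a" using EmC nbC_iff by auto
    then show ?thesis by auto
  qed
qed

lemma card_nbC_pos: "a \<in> V \<Longrightarrow> card (nbC a) > 0"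
  using nbC_ne by (simp add: card_gt_0_iff)

lemma set_Pm: "p \<in> set_pmf Pm \<Longrightarrow> p \<in> EC"
proof -
  assume p: "p \<in> set_pmf Pm"
  then obtain a where a: "a \<in> V" and pa: "p \<in> set_pmf (map_pmf (\<lambda>j. (a,j)) (pmf_of_set (nbC a)))"
    unfolding pair_pmf_def using V_ne by (auto simp: set_bind_pmf)
  then have "p \<in> (\<lambda>j. (a,j)) ` nbC a" using nbC_ne[OF a] by (simp add: set_map_pmf)
  then show ?thesis using nbC_iff by auto
qed

lemma AE_Pm: "AE p in measure_pmf Pm. p \<in> EC"
  using set_Pm by (simp add: AE_measure_pmf_iff)

definition Ep :: "(nat \<times> nat \<Rightarrow> real) \<Rightarrow> real" where
  "Ep f = (\<Sum>a\<in>V. (\<Sum>b\<in>nbC a. f (a,b)) / real (card (nbC a))) / real N"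

lemma Pm_int: "(\<And>a b. a \<in> V \<Longrightarrow> b \<in> nbC a \<Longrightarrow> f (a,b) \<ge> 0) \<Longrightarrow>
  (\<integral>\<^sup>+p. ennreal (f p) \<partial>measure_pmf Pm) = ennreal (Ep f)"
proof -
  assume f0: "\<And>a b. a \<in> V \<Longrightarrow> b \<in> nbC a \<Longrightarrow> f (a,b) \<ge> 0"
  have Npos: "real N > 0" using N2 by simp
  have inner: "(\<integral>\<^sup>+j. ennreal (f (a,j)) \<partial>measure_pmf (pmf_of_set (nbC a)))
      = ennreal ((\<Sum>b\<in>nbC a. f (a,b)) / real (card (nbC a)))" if a: "a \<in> V" for a
  proof -
    have "(\<integral>\<^sup>+j. ennreal (f (a,j)) \<partial>measure_pmf (pmf_of_set (nbC a)))
        = (\<Sum>b\<in>nbC a. ennreal (f (a,b))) / of_nat (card (nbC a))"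
      by (rule nn_integral_pmf_of_set[OF nbC_ne[OF a]]) simp
    also have "(\<Sum>b\<in>nbC a. ennreal (f (a,b))) = ennreal (\<Sum>b\<in>nbC a. f (a,b))"
      using f0[OF a] by (rule sum_ennreal)
    also have "ennreal (\<Sum>b\<in>nbC a. f (a,b)) / of_nat (card (nbC a)) = ennreal ((\<Sum>b\<in>nbC a. f (a,b)) / real (card (nbC a)))"
      unfolding ennreal_of_nat_eq_real_of_nat
      using card_nbC_pos[OF a] f0[OF a] by (intro divide_ennreal) (auto intro: sum_nonneg)
    finally show ?thesis .
  qed
  have nn: "(\<Sum>b\<in>nbC a. f (a,b)) / real (card (nbC a)) \<ge> 0" if "a \<in> V" for a
    using f0[OF that] by (intro divide_nonneg_nonneg sum_nonneg) auto
  have "(\<integral>\<^sup>+p. ennreal (f p) \<partial>measure_pmf Pm) =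
      (\<integral>\<^sup>+a. (\<integral>\<^sup>+j. ennreal (f (a,j)) \<partial>measure_pmf (pmf_of_set (nbC a))) \<partial>measure_pmf (pmf_of_set V))"
    unfolding pair_pmf_def by simp
  also have "\<dots> = (\<Sum>a\<in>V. (\<integral>\<^sup>+j. ennreal (f (a,j)) \<partial>measure_pmf (pmf_of_set (nbC a)))) / of_nat (card V)"
    by (rule nn_integral_pmf_of_set[OF V_ne]) simp
  also have "\<dots> = (\<Sum>a\<in>V. ennreal ((\<Sum>b\<in>nbC a. f (a,b)) / real (card (nbC a)))) / of_nat N"
    using inner by simp
  also have "(\<Sum>a\<in>V. ennreal ((\<Sum>b\<in>nbC a. f (a,b)) / real (card (nbC a)))) =
      ennreal (\<Sum>a\<in>V. (\<Sum>b\<in>nbC a. f (a,b)) / real (card (nbC a)))"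
    using nn by (rule sum_ennreal)
  also have "ennreal (\<Sum>a\<in>V. (\<Sum>b\<in>nbC a. f (a,b)) / real (card (nbC a))) / of_nat N = ennreal (Ep f)"
    unfolding ennreal_of_nat_eq_real_of_nat Ep_def
    using Npos nn by (intro divide_ennreal) (auto intro: sum_nonneg)
  finally show ?thesis .
qed

lemma Ep_lin: "Ep (\<lambda>p. c0 + c1 * f p + c2 * g p) = c0 + c1 * Ep f + c2 * Ep g"
proof -
  have Npos: "real N > 0" using N2 by simp
  have inner: "(\<Sum>b\<in>nbC a. c0 + c1 * f (a,b) + c2 * g (a,b)) / real (card (nbC a)) =
     c0 + c1 * ((\<Sum>b\<in>nbC a. f (a,b)) / real (card (nbC a))) + c2 * ((\<Sum>b\<in>nbC a. g (a,b)) / real (card (nbC a)))"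
    if a: "a \<in> V" for a
  proof -
    have cp: "real (card (nbC a)) > 0" using card_nbC_pos[OF a] by simp
    have "(\<Sum>b\<in>nbC a. c0 + c1 * f (a,b) + c2 * g (a,b)) = real (card (nbC a)) * c0 + c1 * (\<Sum>b\<in>nbC a. f (a,b)) + c2 * (\<Sum>b\<in>nbC a. g (a,b))"
      by (simp add: sum.distrib sum_distrib_left)
    then show ?thesis using cp nbC_ne[OF a] by (simp add: add_divide_distrib)
  qed
  have "Ep (\<lambda>p. c0 + c1 * f p + c2 * g p) = (\<Sum>a\<in>V. c0 + c1 * ((\<Sum>b\<in>nbC a. f (a,b)) / real (card (nbC a))) + c2 * ((\<Sum>b\<in>nbC a. g (a,b)) / real (card (nbC a)))) / real N"
    unfolding Ep_def using inner by simp
  also have "\<dots> = (real N * c0 + c1 * (\<Sum>a\<in>V. (\<Sum>b\<in>nbC a. f (a,b)) / real (card (nbC a))) + c2 * (\<Sum>a\<in>V. (\<Sum>b\<in>nbC a. g (a,b)) / real (card (nbC a)))) / real N"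
    by (simp add: sum.distrib sum_distrib_left)
  also have "\<dots> = c0 + c1 * Ep f + c2 * Ep g" unfolding Ep_def using Npos by (simp add: field_simps)
  finally show ?thesis .
qed

lemma Ep_R: "Ep (\<lambda>p. Rf x (fst p) (snd p)) \<ge> Qf x / real N ^ 2"
proof -
  have Npos: "real N > 0" using N2 by simp
  have t: "(\<Sum>b\<in>nbC a. Rf x a b) / real N \<le> (\<Sum>b\<in>nbC a. Rf x a b) / real (card (nbC a))" if a: "a \<in> V" for a
  proof -
    have "real (card (nbC a)) \<le> real N" using card_nbC by simp
    moreover have "real (card (nbC a)) > 0" using card_nbC_pos[OF a] by simp
    moreover have "(\<Sum>b\<in>nbC a. Rf x a b) \<ge> 0" by (intro sum_nonneg Rf_nonneg)
    ultimately show ?thesis by (intro divide_left_mono) auto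
  qed
  have "Qf x / real N ^ 2 = (\<Sum>a\<in>V. (\<Sum>b\<in>nbC a. Rf x a b) / real N) / real N"
    unfolding Qf_def by (simp add: sum_divide_distrib power2_eq_square)
  also have "\<dots> \<le> (\<Sum>a\<in>V. (\<Sum>b\<in>nbC a. Rf x a b) / real (card (nbC a))) / real N"
    using t Npos by (intro divide_right_mono sum_mono) auto
  also have "\<dots> = Ep (\<lambda>p. Rf x (fst p) (snd p))" unfolding Ep_def by simp
  finally show ?thesis .
qed

lemma Ep_mono: "(\<And>a b. a \<in> V \<Longrightarrow> b \<in> nbC a \<Longrightarrow> f (a,b) \<le> g (a,b)) \<Longrightarrow> Ep f \<le> Ep g"
  unfolding Ep_def using N2
  by (intro divide_right_mono sum_mono) auto

end

lemma H2_bound: "(\<Sum>t\<in>{1..Suc m}. (1 / real t)\<^sup>2) \<le> 2 - 1 / real (Suc m)"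
proof (induction m)
  case 0 then show ?case by simp
next
  case (Suc m)
  have a: "(1 / real (Suc (Suc m)))\<^sup>2 \<le> 1 / real (Suc m) - 1 / real (Suc (Suc m))"
  proof -
    have e: "1 / real (Suc m) - 1 / real (Suc (Suc m)) = 1 / (real (Suc m) * real (Suc (Suc m)))"
      by (simp add: field_simps)
    have "(1 / real (Suc (Suc m)))\<^sup>2 = 1 / (real (Suc (Suc m)) * real (Suc (Suc m)))"
      by (simp add: power2_eq_square)
    also have "\<dots> \<le> 1 / (real (Suc m) * real (Suc (Suc m)))"
      by (intro divide_left_mono mult_right_mono) auto
    finally show ?thesis using e by simp
  qed
  have "(\<Sum>t\<in>{1..Suc (Suc m)}. (1 / real t)\<^sup>2) = (\<Sum>t\<in>{1..Suc m}. (1 / real t)\<^sup>2) + (1 / real (Suc (Suc m)))\<^sup>2"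
    by simp
  then show ?case using Suc a by linarith
qed

lemma H2_le2: "(\<Sum>t\<in>{1..m}. (1 / real t)\<^sup>2) \<le> 2"
proof (cases m)
  case 0 then show ?thesis by simp
next
  case (Suc m')
  have "0 \<le> 1 / real (Suc m')" by simp
  then show ?thesis using H2_bound[of m'] unfolding Suc by linarith
qed

lemma inv_sq_count: "(\<Sum>k<(n::nat). if P k then (1 / real (card {l\<in>{..k}. P l}))\<^sup>2 else 0) =
   (\<Sum>t\<in>{1..card {l\<in>{..<n}. P l}}. (1 / real t)\<^sup>2)"
proof (induction n)
  case 0 then show ?case by simp
next
  case (Suc n)
  have fin: "finite {l\<in>{..<n}. P l}" by simp
  have cn: "card {l\<in>{..n}. P l} = card {l\<in>{..<Suc n}. P l}" by (simp add: lessThan_Suc_atMost)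
  show ?case
  proof (cases "P n")
    case True
    have A: "{l\<in>{..n}. P l} = insert n {l\<in>{..<n}. P l}" using True by auto
    have B: "{l\<in>{..<Suc n}. P l} = insert n {l\<in>{..<n}. P l}" using True by auto
    have cA: "card (insert n {l\<in>{..<n}. P l}) = Suc (card {l\<in>{..<n}. P l})" using fin by simp
    have "(\<Sum>k<Suc n. if P k then (1 / real (card {l\<in>{..k}. P l}))\<^sup>2 else 0)
        = (\<Sum>k<n. if P k then (1 / real (card {l\<in>{..k}. P l}))\<^sup>2 else 0) + (1 / real (card {l\<in>{..n}. P l}))\<^sup>2"
      using True by simp
    also have "\<dots> = (\<Sum>t\<in>{1..card {l\<in>{..<n}. P l}}. (1 / real t)\<^sup>2) + (1 / real (Suc (card {l\<in>{..<n}. P l})))\<^sup>2"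
      unfolding A cA Suc.IH ..
    also have "\<dots> = (\<Sum>t\<in>{1..Suc (card {l\<in>{..<n}. P l})}. (1 / real t)\<^sup>2)" by simp
    also have "\<dots> = (\<Sum>t\<in>{1..card {l\<in>{..<Suc n}. P l}}. (1 / real t)\<^sup>2)" unfolding B cA ..
    finally show ?thesis .
  next
    case False
    have "{l\<in>{..<Suc n}. P l} = {l\<in>{..<n}. P l}" using False by (auto simp: less_Suc_eq)
    then show ?thesis using Suc False by simp
  qed
qed

lemma inv_sq: "(\<Sum>k<(n::nat). if P k then (1 / real (card {l\<in>{..k}. P l}))\<^sup>2 else 0) \<le> 2"
  unfolding inv_sq_count by (rule H2_le2)

context gs3 begin

abbreviation st where "st \<omega> k \<equiv> gstate N EI Om grad x0 \<omega> k"

definition Ak :: "(nat \<Rightarrow> nat \<times> nat) \<Rightarrow> nat \<Rightarrow> real" where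
  "Ak \<omega> k = (1 / real (nu \<omega> k (fst (\<omega> k))))\<^sup>2 + (1 / real (nu \<omega> k (snd (\<omega> k))))\<^sup>2"

lemma Ak_nonneg: "Ak \<omega> k \<ge> 0" unfolding Ak_def by simp

lemma nu_dep: "(\<forall>l\<le>k. \<omega> l = \<omega>' l) \<Longrightarrow> nu \<omega> k i = nu \<omega>' k i"
  unfolding nu_def by (intro arg_cong[where f=card]) auto

lemma st_dep: "(\<forall>l<k. \<omega> l = \<omega>' l) \<Longrightarrow> st \<omega> k = st \<omega>' k"
proof (induction k)
  case 0 then show ?case by simp
next
  case (Suc k)
  have s: "st \<omega> k = st \<omega>' k" using Suc by auto
  have n: "(\<lambda>i. 1 / real (nu \<omega> k i)) = (\<lambda>i. 1 / real (nu \<omega>' k i))"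
    using nu_dep[of k \<omega> \<omega>'] Suc.prems by auto
  have w: "\<omega> k = \<omega>' k" using Suc.prems by auto
  show ?case using s n w by simp
qed

lemma Ak_dep: "(\<forall>l<Suc k. \<omega> l = \<omega>' l) \<Longrightarrow> Ak \<omega> k = Ak \<omega>' k"
proof -
  assume h: "\<forall>l<Suc k. \<omega> l = \<omega>' l"
  then have "\<forall>l\<le>k. \<omega> l = \<omega>' l" by auto
  then show ?thesis unfolding Ak_def using nu_dep[of k \<omega> \<omega>'] h by auto
qed

definition rho :: real where "rho = 1 / (8 * real N ^ 4)"
definition eps :: real where "eps = rho / 2"
definition cc :: real where "cc = (1 + eps) * (1 - rho)"
definition KK :: real where "KK = (1 + 1 / eps) * real N * Gb\<^sup>2"

lemma rho_pos: "rho > 0" unfolding rho_def using N2 by simp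
lemma rho_le1: "rho \<le> 1"
proof -
  have "(1::real) \<le> real N ^ 4" using N2 by (simp add: one_le_power)
  then have h: "(1::real) \<le> 8 * real N ^ 4" by linarith
  have "1 / (8 * real N ^ 4) \<le> 1 / (1::real)" using h N2 by (intro divide_left_mono) auto
  then show ?thesis unfolding rho_def by simp
qed
lemma eps_pos: "eps > 0" unfolding eps_def using rho_pos by simp
lemma cc_nonneg: "cc \<ge> 0" unfolding cc_def using eps_pos rho_le1 by simp
lemma cc_less1: "cc < 1"
proof -
  have "cc = 1 - rho / 2 - rho * rho / 2" unfolding cc_def eps_def by (simp add: field_simps)
  moreover have "rho * rho \<ge> 0" by simp
  ultimately show ?thesis using rho_pos by linarith
qed
lemma KK_nonneg: "KK \<ge> 0" unfolding KK_def using eps_pos by simp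

lemma ER_Phi: "Ep (\<lambda>p. Rf x (fst p) (snd p)) \<ge> rho * Phi x"
proof -
  have Np: "real N > 0" using N2 by simp
  have "rho * Phi x \<le> rho * (8 * real N ^ 2 * Qf x)" using Phi_le_Q rho_pos by (simp add: mult_left_mono)
  also have "\<dots> = Qf x / real N ^ 2" unfolding rho_def using Np by (simp add: field_simps power2_eq_square eval_nat_numeral)
  also have "\<dots> \<le> Ep (\<lambda>p. Rf x (fst p) (snd p))" by (rule Ep_R)
  finally show ?thesis .
qed

lemma step_pt: "p \<in> EC \<Longrightarrow> Phi (st ((fun_upd \<omega> k p)) (Suc k)) \<le>
   (1 + eps) * (Phi (st \<omega> k) - Rf (st \<omega> k) (fst p) (snd p)) + KK * Ak ((fun_upd \<omega> k p)) k"
proof -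
  assume pE: "p \<in> EC"
  obtain a b where p: "p = (a,b)" by (cases p)
  let ?\<omega> = "(fun_upd \<omega> k p)"
  let ?al = "\<lambda>i. 1 / real (nu ?\<omega> k i)"
  have s: "st ?\<omega> k = st \<omega> k" by (rule st_dep) simp
  have e: "st ?\<omega> (Suc k) = gstep N EI Om grad ?al (a,b) (st \<omega> k)" using s p by simp
  have al: "\<forall>i. ?al i \<ge> 0" by simp
  have "Phi (st ?\<omega> (Suc k)) = Phi (gstep N EI Om grad ?al (a,b) (st \<omega> k))" using e by simp
  also have "\<dots> \<le> (1 + eps) * (Phi (st \<omega> k) - Rf (st \<omega> k) a b)
     + (1 + 1/eps) * real N * ((?al a * Gb)\<^sup>2 + (?al b * Gb)\<^sup>2)"
    by (rule Phi_step[OF valid_state[OF x0v] pE[unfolded p] al eps_pos])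
  also have "(1 + 1/eps) * real N * ((?al a * Gb)\<^sup>2 + (?al b * Gb)\<^sup>2) = KK * Ak ?\<omega> k"
  proof -
    have Akv: "Ak ?\<omega> k = (?al a)\<^sup>2 + (?al b)\<^sup>2" unfolding Ak_def using p by simp
    have "(?al a * Gb)\<^sup>2 + (?al b * Gb)\<^sup>2 = Gb\<^sup>2 * ((?al a)\<^sup>2 + (?al b)\<^sup>2)"
      by (simp only: power_mult_distrib) (simp add: algebra_simps)
    then show ?thesis unfolding Akv KK_def by simp
  qed
  finally have "Phi (st ?\<omega> (Suc k)) \<le> (1 + eps) * (Phi (st \<omega> k) - Rf (st \<omega> k) a b) + KK * Ak ?\<omega> k" .
  then show ?thesis unfolding p fst_conv snd_conv .
qed

lemma step_int: "(\<integral>\<^sup>+p. ennreal (Phi (st ((fun_upd \<omega> k p)) (Suc k))) \<partial>measure_pmf Pm) \<le>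
   ennreal cc * ennreal (Phi (st \<omega> k)) + ennreal KK * (\<integral>\<^sup>+p. ennreal (Ak ((fun_upd \<omega> k p)) k) \<partial>measure_pmf Pm)"
proof -
  let ?x = "st \<omega> k"
  define F where "F p = (1 + eps) * Phi ?x + (- (1 + eps)) * Rf ?x (fst p) (snd p) + KK * Ak ((fun_upd \<omega> k p)) k" for p
  have Fe: "F p = (1 + eps) * (Phi ?x - Rf ?x (fst p) (snd p)) + KK * Ak ((fun_upd \<omega> k p)) k" for p
    unfolding F_def by (simp add: algebra_simps)
  have le: "Phi (st ((fun_upd \<omega> k p)) (Suc k)) \<le> F p" if "p \<in> EC" for p
    unfolding Fe using step_pt[OF that] .
  have F0: "F (a,b) \<ge> 0" if "a \<in> V" "b \<in> nbC a" for a b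
    using le[of "(a,b)"] that nbC_iff Phi_nonneg[of "st ((fun_upd \<omega> k (a,b))) (Suc k)"] by auto
  have I1: "(\<integral>\<^sup>+p. ennreal (Phi (st ((fun_upd \<omega> k p)) (Suc k))) \<partial>measure_pmf Pm) \<le> (\<integral>\<^sup>+p. ennreal (F p) \<partial>measure_pmf Pm)"
  proof (rule nn_integral_mono_AE)
    show "AE p in measure_pmf Pm. ennreal (Phi (st (fun_upd \<omega> k p) (Suc k))) \<le> ennreal (F p)"
      using AE_Pm by eventually_elim (rule ennreal_leI, erule le)
  qed
  have I2: "(\<integral>\<^sup>+p. ennreal (F p) \<partial>measure_pmf Pm) = ennreal (Ep F)" using F0 by (rule Pm_int)
  have "Ep F = (1 + eps) * Phi ?x + (- (1 + eps)) * Ep (\<lambda>p. Rf ?x (fst p) (snd p)) + KK * Ep (\<lambda>p. Ak ((fun_upd \<omega> k p)) k)"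
    unfolding F_def by (rule Ep_lin)
  also have "\<dots> \<le> cc * Phi ?x + KK * Ep (\<lambda>p. Ak ((fun_upd \<omega> k p)) k)"
  proof -
    have "(1 + eps) * (rho * Phi ?x) \<le> (1 + eps) * Ep (\<lambda>p. Rf ?x (fst p) (snd p))"
      using ER_Phi eps_pos by (intro mult_left_mono) auto
    then show ?thesis unfolding cc_def by (simp add: algebra_simps)
  qed
  finally have I3: "Ep F \<le> cc * Phi ?x + KK * Ep (\<lambda>p. Ak ((fun_upd \<omega> k p)) k)" .
  have A: "(\<integral>\<^sup>+p. ennreal (Phi (st ((fun_upd \<omega> k p)) (Suc k))) \<partial>measure_pmf Pm) \<le> ennreal (cc * Phi ?x + KK * Ep (\<lambda>p. Ak ((fun_upd \<omega> k p)) k))"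
    using order_trans[OF I1[unfolded I2] ennreal_leI[OF I3]] .
  have EA: "ennreal (Ep (\<lambda>p. Ak ((fun_upd \<omega> k p)) k)) = (\<integral>\<^sup>+p. ennreal (Ak ((fun_upd \<omega> k p)) k) \<partial>measure_pmf Pm)"
    by (rule Pm_int[symmetric]) (simp add: Ak_nonneg)
  have EA0: "Ep (\<lambda>p. Ak ((fun_upd \<omega> k p)) k) \<ge> 0"
    unfolding Ep_def using Ak_nonneg N2 by (intro divide_nonneg_nonneg sum_nonneg) auto
  have "ennreal (cc * Phi ?x + KK * Ep (\<lambda>p. Ak ((fun_upd \<omega> k p)) k)) =
      ennreal cc * ennreal (Phi ?x) + ennreal KK * ennreal (Ep (\<lambda>p. Ak ((fun_upd \<omega> k p)) k))"
    using cc_nonneg KK_nonneg Phi_nonneg EA0 by (simp add: ennreal_plus ennreal_mult)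
  then show ?thesis using A unfolding EA by simp
qed


lemma Mp_prob: "prob_space Mp"
  by (rule prob_space_PiM) (simp add: prob_space_measure_pmf)

lemma Mp_space1: "emeasure Mp (space Mp) = 1"
  using Mp_prob by (simp add: prob_space.emeasure_space_1)

lemma int_const: "(\<integral>\<^sup>+\<omega>. ennreal c \<partial>Mp) = ennreal c"
  using Mp_space1 by (simp add: nn_integral_const)

definition u :: "nat \<Rightarrow> ennreal" where "u k = (\<integral>\<^sup>+\<omega>. ennreal (Phi (st \<omega> k)) \<partial>Mp)"
definition w :: "nat \<Rightarrow> ennreal" where "w k = (\<integral>\<^sup>+\<omega>. ennreal (Ak \<omega> k) \<partial>Mp)"

lemma dep_Phi: "(\<forall>l<k. x l = y l) \<Longrightarrow> ennreal (Phi (st x k)) = ennreal (Phi (st y k))"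
  using st_dep[of k x y] by simp

lemma dep_Ak: "(\<forall>l<Suc k. x l = y l) \<Longrightarrow> ennreal (Ak x k) = ennreal (Ak y k)"
  using Ak_dep[of k x y] by simp

lemma meas_Phi: "(\<lambda>\<omega>. ennreal (Phi (st \<omega> k))) \<in> borel_measurable Mp"
  using meas_dep[of k "\<lambda>\<omega>. ennreal (Phi (st \<omega> k))" UNIV Pm] dep_Phi by blast

lemma meas_Ak: "(\<lambda>\<omega>. ennreal (Ak \<omega> k)) \<in> borel_measurable Mp"
  using meas_dep[of "Suc k" "\<lambda>\<omega>. ennreal (Ak \<omega> k)" UNIV Pm] dep_Ak by blast

lemma dep_Ak2: "(\<forall>l<k. x l = y l) \<Longrightarrow> (\<integral>\<^sup>+p. ennreal (Ak (fun_upd x k p) k) \<partial>measure_pmf Pm) = (\<integral>\<^sup>+p. ennreal (Ak (fun_upd y k p) k) \<partial>measure_pmf Pm)"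
proof -
  assume h: "\<forall>l<k. x l = y l"
  show ?thesis
  proof (intro nn_integral_cong)
    fix p
    have "\<forall>l<Suc k. (fun_upd x k p) l = (fun_upd y k p) l" using h by (auto simp: less_Suc_eq)
    then show "ennreal (Ak (fun_upd x k p) k) = ennreal (Ak (fun_upd y k p) k)" by (rule dep_Ak)
  qed
qed

lemma meas_Ak2: "(\<lambda>\<omega>. \<integral>\<^sup>+p. ennreal (Ak (fun_upd \<omega> k p) k) \<partial>measure_pmf Pm) \<in> borel_measurable Mp"
  using meas_dep[of k "\<lambda>\<omega>. \<integral>\<^sup>+p. ennreal (Ak (fun_upd \<omega> k p) k) \<partial>measure_pmf Pm" UNIV Pm] dep_Ak2 by blast

lemma u_step: "u (Suc k) \<le> ennreal cc * u k + ennreal KK * w k"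
proof -
  have "u (Suc k) = (\<integral>\<^sup>+\<omega>. (\<integral>\<^sup>+p. ennreal (Phi (st (fun_upd \<omega> k p) (Suc k))) \<partial>measure_pmf Pm) \<partial>Mp)"
    unfolding u_def by (rule split_int) (rule dep_Phi)
  also have "\<dots> \<le> (\<integral>\<^sup>+\<omega>. ennreal cc * ennreal (Phi (st \<omega> k)) + ennreal KK * (\<integral>\<^sup>+p. ennreal (Ak (fun_upd \<omega> k p) k) \<partial>measure_pmf Pm) \<partial>Mp)"
    by (intro nn_integral_mono step_int)
  also have "\<dots> = ennreal cc * u k + ennreal KK * (\<integral>\<^sup>+\<omega>. (\<integral>\<^sup>+p. ennreal (Ak (fun_upd \<omega> k p) k) \<partial>measure_pmf Pm) \<partial>Mp)"
    unfolding u_def using meas_Phi meas_Ak2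
    by (simp add: nn_integral_add nn_integral_cmult)
  also have "(\<integral>\<^sup>+\<omega>. (\<integral>\<^sup>+p. ennreal (Ak (fun_upd \<omega> k p) k) \<partial>measure_pmf Pm) \<partial>Mp) = w k"
    unfolding w_def by (rule split_int[symmetric]) (rule dep_Ak)
  finally show ?thesis .
qed

lemma u_bound: "u k \<le> ennreal (real N * real N * (2 * Db)\<^sup>2)"
proof -
  have "u k \<le> (\<integral>\<^sup>+\<omega>. ennreal (real N * real N * (2 * Db)\<^sup>2) \<partial>Mp)"
    unfolding u_def by (intro nn_integral_mono ennreal_leI Phi_bound valid_state x0v)
  then show ?thesis using int_const by simp
qed

lemma AE_valid: "AE \<omega> in Mp. \<forall>k. \<omega> k \<in> EC"
proof -
  have "AE \<omega> in Mp. \<omega> k \<in> EC" for k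
    by (rule AE_PiM_component) (simp_all add: prob_space_measure_pmf AE_Pm)
  then show ?thesis by (simp add: AE_all_countable)
qed

lemma Ak_sum_valid: "(\<forall>k. \<omega> k \<in> EC) \<Longrightarrow> (\<Sum>k<n. Ak \<omega> k) \<le> 2 * real N"
proof -
  assume val: "\<forall>k. \<omega> k \<in> EC"
  define g where "g k i = (if fst (\<omega> k) = i \<or> snd (\<omega> k) = i then (1 / real (nu \<omega> k i))\<^sup>2 else 0)" for k i
  have Ak_eq: "Ak \<omega> k = (\<Sum>i\<in>V. g k i)" for k
  proof -
    obtain a b where ab: "\<omega> k = (a,b)" by (cases "\<omega> k")
    have e: "(a,b) \<in> EC" using val ab by metis
    have aV: "a \<in> V" and bV: "b \<in> V" and neq: "a \<noteq> b" using e EC_V EC_irr by auto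
    have "(\<Sum>i\<in>V. g k i) = (\<Sum>i\<in>V \<inter> {i. i = a \<or> i = b}. g k i)"
      unfolding g_def ab by (intro sum.mono_neutral_right) auto
    also have "V \<inter> {i. i = a \<or> i = b} = {a,b}" using aV bV by auto
    also have "(\<Sum>i\<in>{a,b}. g k i) = g k a + g k b" using neq by simp
    also have "\<dots> = Ak \<omega> k" unfolding g_def Ak_def ab by simp
    finally show ?thesis by simp
  qed
  have "(\<Sum>k<n. Ak \<omega> k) = (\<Sum>i\<in>V. \<Sum>k<n. g k i)"
    unfolding Ak_eq by (rule sum.swap)
  also have "\<dots> \<le> (\<Sum>i\<in>V. 2)"
  proof (rule sum_mono)
    fix i assume "i \<in> V"
    have "(\<Sum>k<n. g k i) = (\<Sum>k<n. if (fst (\<omega> k) = i \<or> snd (\<omega> k) = i)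
        then (1 / real (card {l\<in>{..k}. fst (\<omega> l) = i \<or> snd (\<omega> l) = i}))\<^sup>2 else 0)"
      unfolding g_def nu_def ..
    also have "\<dots> \<le> 2" by (rule inv_sq)
    finally show "(\<Sum>k<n. g k i) \<le> 2" .
  qed
  also have "\<dots> = 2 * real N" by simp
  finally show ?thesis .
qed

lemma w_sum: "(\<Sum>k<n. w k) \<le> ennreal (2 * real N)"
proof -
  have "(\<Sum>k<n. w k) = (\<integral>\<^sup>+\<omega>. (\<Sum>k<n. ennreal (Ak \<omega> k)) \<partial>Mp)"
    unfolding w_def by (rule nn_integral_sum[symmetric]) (rule meas_Ak)
  also have "\<dots> \<le> (\<integral>\<^sup>+\<omega>. ennreal (2 * real N) \<partial>Mp)"
  proof (rule nn_integral_mono_AE)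
    show "AE \<omega> in Mp. (\<Sum>k<n. ennreal (Ak \<omega> k)) \<le> ennreal (2 * real N)"
      using AE_valid
    proof eventually_elim
      case (elim \<omega>)
      have "(\<Sum>k<n. ennreal (Ak \<omega> k)) = ennreal (\<Sum>k<n. Ak \<omega> k)"
        by (rule sum_ennreal) (simp add: Ak_nonneg)
      also have "\<dots> \<le> ennreal (2 * real N)" by (rule ennreal_leI) (rule Ak_sum_valid[OF elim])
      finally show ?case .
    qed
  qed
  also have "\<dots> = ennreal (2 * real N)" by (rule int_const)
  finally show ?thesis .
qed

end

context gs3 begin

definition r :: "nat \<Rightarrow> real" where "r k = enn2real (u k)"
definition sw :: "nat \<Rightarrow> real" where "sw k = enn2real (w k)"
definition Bd :: real where "Bd = (r 0 + KK * (2 * real N)) / (1 - cc)"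

lemma u_fin: "u k = ennreal (r k)"
proof -
  have "u k < top" using u_bound[of k] by (simp add: le_less_trans)
  then show ?thesis unfolding r_def by (simp add: ennreal_enn2real)
qed

lemma w_fin: "w k = ennreal (sw k)"
proof -
  have "w k \<le> (\<Sum>j<Suc k. w j)" by (rule member_le_sum) auto
  also have "\<dots> \<le> ennreal (2 * real N)" by (rule w_sum)
  finally have "w k < top" by (simp add: le_less_trans)
  then show ?thesis unfolding sw_def by (simp add: ennreal_enn2real)
qed

lemma r_nonneg: "r k \<ge> 0" unfolding r_def by simp
lemma sw_nonneg: "sw k \<ge> 0" unfolding sw_def by simp

lemma r_rec: "r (Suc k) \<le> cc * r k + KK * sw k"
proof -
  have "ennreal (r (Suc k)) \<le> ennreal cc * ennreal (r k) + ennreal KK * ennreal (sw k)"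
    using u_step[of k] unfolding u_fin w_fin .
  also have "\<dots> = ennreal (cc * r k + KK * sw k)"
    using cc_nonneg KK_nonneg r_nonneg sw_nonneg by (simp add: ennreal_plus ennreal_mult)
  finally have h: "ennreal (r (Suc k)) \<le> ennreal (cc * r k + KK * sw k)" .
  have nn: "0 \<le> cc * r k + KK * sw k" using cc_nonneg KK_nonneg r_nonneg[of k] sw_nonneg[of k] by simp
  show ?thesis using ennreal_le_iff[OF nn] h by blast
qed

lemma sw_sum: "(\<Sum>k<n. sw k) \<le> 2 * real N"
proof -
  have "ennreal (\<Sum>k<n. sw k) = (\<Sum>k<n. ennreal (sw k))"
    by (rule sum_ennreal[symmetric]) (simp add: sw_nonneg)
  also have "\<dots> = (\<Sum>k<n. w k)" unfolding w_fin ..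
  also have "\<dots> \<le> ennreal (2 * real N)" by (rule w_sum)
  finally show ?thesis by (simp add: ennreal_le_iff)
qed

lemma S_bound: "(\<Sum>k<n. r k) \<le> Bd"
proof (cases n)
  case 0
  have "r 0 + KK * (2 * real N) \<ge> 0" using r_nonneg KK_nonneg by simp
  then show ?thesis using 0 cc_less1 unfolding Bd_def by simp
next
  case (Suc n')
  let ?S = "\<Sum>k<n. r k"
  have a: "(\<Sum>k<n'. r k) \<le> ?S" unfolding Suc using r_nonneg by (simp add: sum_nonneg)
  have "?S = r 0 + (\<Sum>k<n'. r (Suc k))" unfolding Suc by (rule sum.lessThan_Suc_shift)
  also have "\<dots> \<le> r 0 + (\<Sum>k<n'. cc * r k + KK * sw k)" using r_rec by (simp add: sum_mono)
  also have "\<dots> = r 0 + cc * (\<Sum>k<n'. r k) + KK * (\<Sum>k<n'. sw k)"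
    by (simp add: sum.distrib sum_distrib_left)
  also have "\<dots> \<le> r 0 + cc * ?S + KK * (2 * real N)"
    using a sw_sum[of n'] cc_nonneg KK_nonneg by (intro add_mono mult_left_mono) auto
  finally have "?S * (1 - cc) \<le> r 0 + KK * (2 * real N)" by (simp add: algebra_simps)
  then show ?thesis unfolding Bd_def using cc_less1 by (simp add: pos_le_divide_eq)
qed

definition fk :: "(nat \<Rightarrow> nat \<times> nat) \<Rightarrow> nat \<Rightarrow> real" where
  "fk \<omega> k = normsq m (\<lambda>p. mulv m (Wmat N EI (fst (\<omega> k)) (snd (\<omega> k))) (st \<omega> k) p
        - mulv N (Hmat N EI) (mulv m (Hbar N EI) (st \<omega> k)) p)"

lemma fk_le: "fk \<omega> k \<le> real m * (4 * Phi (st \<omega> k))"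
  unfolding fk_def by (rule F_bound)

lemma dep_fk: "(\<forall>l<Suc k. x l = y l) \<Longrightarrow> ennreal (fk x k) = ennreal (fk y k)"
proof -
  assume h: "\<forall>l<Suc k. x l = y l"
  then have "st x k = st y k" by (intro st_dep) auto
  moreover have "x k = y k" using h by auto
  ultimately show ?thesis unfolding fk_def by simp
qed

lemma meas_fk: "(\<lambda>\<omega>. ennreal (fk \<omega> k)) \<in> borel_measurable Mp"
  using meas_dep[of "Suc k" "\<lambda>\<omega>. ennreal (fk \<omega> k)" UNIV Pm] dep_fk by blast

lemma int_fk: "(\<integral>\<^sup>+\<omega>. ennreal (fk \<omega> k) \<partial>Mp) \<le> ennreal (4 * real m * r k)"
proof -
  have "(\<integral>\<^sup>+\<omega>. ennreal (fk \<omega> k) \<partial>Mp) \<le> (\<integral>\<^sup>+\<omega>. ennreal (4 * real m) * ennreal (Phi (st \<omega> k)) \<partial>Mp)"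
  proof (intro nn_integral_mono)
    fix \<omega>
    have "ennreal (fk \<omega> k) \<le> ennreal (4 * real m * Phi (st \<omega> k))"
      using fk_le[of \<omega> k] by (intro ennreal_leI) (simp add: algebra_simps)
    also have "\<dots> = ennreal (4 * real m) * ennreal (Phi (st \<omega> k))"
      using Phi_nonneg by (simp add: ennreal_mult)
    finally show "ennreal (fk \<omega> k) \<le> ennreal (4 * real m) * ennreal (Phi (st \<omega> k))" .
  qed
  also have "\<dots> = ennreal (4 * real m) * u k" unfolding u_def using meas_Phi by (simp add: nn_integral_cmult)
  also have "\<dots> = ennreal (4 * real m * r k)" unfolding u_fin using r_nonneg by (simp add: ennreal_mult)
  finally show ?thesis .
qed

lemma sum_fk: "(\<Sum>k. \<integral>\<^sup>+\<omega>. ennreal (fk \<omega> k) \<partial>Mp) \<le> ennreal (4 * real m * Bd)"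
proof -
  have "(\<Sum>k<n. \<integral>\<^sup>+\<omega>. ennreal (fk \<omega> k) \<partial>Mp) \<le> ennreal (4 * real m * Bd)" for n
  proof -
    have "(\<Sum>k<n. \<integral>\<^sup>+\<omega>. ennreal (fk \<omega> k) \<partial>Mp) \<le> (\<Sum>k<n. ennreal (4 * real m * r k))"
      by (intro sum_mono int_fk)
    also have "\<dots> = ennreal (\<Sum>k<n. 4 * real m * r k)"
      by (rule sum_ennreal) (simp add: r_nonneg)
    also have "\<dots> = ennreal (4 * real m * (\<Sum>k<n. r k))" by (simp add: sum_distrib_left)
    also have "\<dots> \<le> ennreal (4 * real m * Bd)"
      using S_bound[of n] by (intro ennreal_leI mult_left_mono) auto
    finally show ?thesis .
  qed
  then show ?thesis unfolding suminf_eq_SUP by (intro SUP_least) auto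
qed

lemma subalg: "subalgebra Mp (Mfield N EC k)"
proof -
  let ?A = "{(\<lambda>\<omega>. \<omega> l) -` A \<inter> space Mp | l A. l < k}"
  have AP: "?A \<subseteq> Pow (space Mp)" by auto
  have AS: "?A \<subseteq> sets Mp"
  proof
    fix X assume "X \<in> ?A"
    then obtain l A where X: "X = (\<lambda>\<omega>. \<omega> l) -` A \<inter> space Mp" by blast
    have "(\<lambda>\<omega>. \<omega> l) \<in> measurable Mp (measure_pmf Pm)" by (rule measurable_component_singleton) simp
    then show "X \<in> sets Mp" unfolding X by (rule measurable_sets) simp
  qed
  have "Mfield N EC k = sigma (space Mp) ?A" unfolding Mfield_def Mp_eq ..
  moreover have "space (sigma (space Mp) ?A) = space Mp" by (rule space_measure_of_conv)
  moreover have "sets (sigma (space Mp) ?A) \<subseteq> sets Mp"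
    using sets_measure_of[OF AP] sets.sigma_sets_subset[OF AS] by simp
  ultimately show ?thesis unfolding subalgebra_def by simp
qed

lemma sfs: "sigma_finite_subalgebra Mp (Mfield N EC k)"
proof (rule finite_measure_subalgebra_is_sigma_finite)
  have "finite_measure Mp" using Mp_prob unfolding prob_space_def by simp
  then show "finite_measure_subalgebra Mp (Mfield N EC k)"
    unfolding finite_measure_subalgebra_def finite_measure_subalgebra_axioms_def using subalg by simp
qed

lemma main: "AE \<omega> in pairs_space N EC.
   (\<Sum>k. nn_cond_exp (pairs_space N EC) (Mfield N EC k) (\<lambda>\<omega>'. ennreal (fk \<omega>' k)) \<omega>) < \<infinity>"
proof -
  let ?c = "\<lambda>k. nn_cond_exp Mp (Mfield N EC k) (\<lambda>\<omega>'. ennreal (fk \<omega>' k))"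
  have mc: "?c k \<in> borel_measurable Mp" for k by (rule borel_measurable_nn_cond_exp2)
  have ck: "(\<integral>\<^sup>+\<omega>. ?c k \<omega> \<partial>Mp) = (\<integral>\<^sup>+\<omega>. ennreal (fk \<omega> k) \<partial>Mp)" for k
    using sigma_finite_subalgebra.nn_cond_exp_intg[OF sfs[of k], of "\<lambda>_. 1" "\<lambda>\<omega>'. ennreal (fk \<omega>' k)"] meas_fk
    by simp
  have "(\<integral>\<^sup>+\<omega>. (\<Sum>k. ?c k \<omega>) \<partial>Mp) = (\<Sum>k. \<integral>\<^sup>+\<omega>. ?c k \<omega> \<partial>Mp)"
    by (rule nn_integral_suminf) (rule mc)
  also have "\<dots> = (\<Sum>k. \<integral>\<^sup>+\<omega>. ennreal (fk \<omega> k) \<partial>Mp)" using ck by simp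
  also have "\<dots> \<le> ennreal (4 * real m * Bd)" by (rule sum_fk)
  finally have fin: "(\<integral>\<^sup>+\<omega>. (\<Sum>k. ?c k \<omega>) \<partial>Mp) \<noteq> \<infinity>" by (auto simp: top_unique)
  have ms: "(\<lambda>\<omega>. \<Sum>k. ?c k \<omega>) \<in> borel_measurable Mp" by (rule borel_measurable_suminf_order) (rule mc)
  have "AE \<omega> in Mp. (\<Sum>k. ?c k \<omega>) \<noteq> \<infinity>" using nn_integral_PInf_AE[OF ms fin] .
  then show ?thesis unfolding Mp_eq by (simp add: less_top)
qed

end

theorem lemma8:
  fixes N :: nat and EI EC Em :: "(nat \<times> nat) set"
    and Om :: "nat \<Rightarrow> real set"
    and J :: "nat \<Rightarrow> (nat \<Rightarrow> real) \<Rightarrow> real"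
    and grad :: "nat \<Rightarrow> (nat \<Rightarrow> real) \<Rightarrow> real"
    and x0 :: "nat \<Rightarrow> real"
  assumes N2: "N \<ge> 2"
    and GI: "simple_graph N EI" "graph_connected N EI" "\<not> graph_complete N EI"
    and Gm: "max_tri_free_spanning N EI Em"
    and GC: "simple_graph N EC" "Em \<subseteq> EC" "EC \<subseteq> EI"
    and Om: "\<And>i. i \<in> {1..N} \<Longrightarrow> Om i \<noteq> {} \<and> compact (Om i) \<and> convex (Om i)"
    and Jcont: "\<And>i. i \<in> {1..N} \<Longrightarrow> continuous_on (Omega_loc N EI Om i) (J i)"
    and Jdiff: "\<And>i y. i \<in> {1..N} \<Longrightarrow> y \<in> Omega_loc N EI Om i \<Longrightarrow>
                  ((\<lambda>t. J i (y(i := t))) has_real_derivative grad i y) (at (y i) within Om i)"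
    and gradcont: "\<And>i. i \<in> {1..N} \<Longrightarrow> continuous_on (Omega_loc N EI Om i) (grad i)"
    and Jconv: "\<And>i y. i \<in> {1..N} \<Longrightarrow> y \<in> Omega_loc N EI Om i \<Longrightarrow>
                  convex_on (Om i) (\<lambda>t. J i (y(i := t)))"
    and x0: "\<And>i j. i \<in> {1..N} \<Longrightarrow> j \<in> NtI N EI i \<Longrightarrow> x0 (spos N EI i j) \<in> Om j"
  shows "AE \<omega> in pairs_space N EC.
           (\<Sum>k. nn_cond_exp (pairs_space N EC) (Mfield N EC k)
              (\<lambda>\<omega>'. ennreal (normsq (mtot N EI)
                 (\<lambda>p. mulv (mtot N EI) (Wmat N EI (fst (\<omega>' k)) (snd (\<omega>' k)))
                        (gstate N EI Om grad x0 \<omega>' k) p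
                      - mulv N (Hmat N EI) (mulv (mtot N EI) (Hbar N EI) (gstate N EI Om grad x0 \<omega>' k)) p)))
              \<omega>) < \<infinity>"
proof -
  interpret g2: gs2 N EI EC Em Om grad
  proof unfold_locales
    show "2 \<le> N" by (rule N2)
    show "simple_graph N EI" by (rule GI(1))
    show "graph_connected N EI" by (rule GI(2))
    show "max_tri_free_spanning N EI Em" by (rule Gm)
    show "simple_graph N EC" by (rule GC(1))
    show "Em \<subseteq> EC" by (rule GC(2))
    show "EC \<subseteq> EI" by (rule GC(3))
    show "\<And>i. i \<in> {1..N} \<Longrightarrow> Om i \<noteq> {} \<and> compact (Om i) \<and> convex (Om i)" by (rule Om)
    show "\<And>i. i \<in> {1..N} \<Longrightarrow> continuous_on (Omega_loc N EI Om i) (grad i)" by (rule gradcont)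
  qed
  have v: "g2.valid x0" unfolding g2.valid_def using x0 by blast
  interpret g3: gs3 N EI EC Em Om grad x0
    by (rule gs3.intro[OF g2.gs2_axioms]) (simp add: gs3_axioms_def v)
  show ?thesis using g3.main unfolding g3.fk_def .
qed


end
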